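(* For the BGW spectral curve with formal parameters $\mathsf v_a$, the coefficients satisfy, for all $g\ge0$, $n\ge1$ with $2g-2+n>0$ and $a_1,\ldots,a_n\ge0$, $$F^{\mathrm{BGW}(g)}_{a_1,\ldots,a_n}=\sum_{m\ge0}\frac{(-1)^m}{m!}\sum_{b_1,\ldots,b_m\ge1}\Big(\prod_{j=1}^m\frac{\mathsf v_{2b_j-1}}{2b_j+1}\Big)F^{\mathrm B(g)}_{a_1,\ldots,a_n,b_1,\ldots,b_m},$$ where only terms with $\sum_ia_i=g-1-\sum_jb_j$ contribute.
   Context: For a meromorphic function $\mathsf y(z)$ (or a formal Laurent series in $z$ with coefficients in a ring of formal parameters) with $\mathsf x(z)=z^2/2$, define multidifferentials $\omega_{g,n}$ ($2g-2+n\ge0$, $n\ge1$) by $\omega_{0,2}(z_1,z_2)=\frac{dz_1\otimes dz_2}{(z_1-z_2)^2}$ and, for $2g-2+n>0$, the Chekhov–Eynard–Orantin recursion $\omega_{g,n}(z_1,\ldots,z_n)=\mathrm{Res}_{w=0}K(z_1,w)\big[\omega_{g-1,n+1}(w,-w,z_K)+\sum'\omega_{h,1+|J|}(w,z_J)\,\omega_{h',1+|J'|}(-w,z_{J'})\big]$, $K(z,w)=\frac{-dz}{(z^2-w^2)(\mathsf y(w)-\mathsf y(-w))\,dw}$, $K=\{2,\ldots,n\}$, where $\sum'$ runs over $h+h'=g$, $J\sqcup J'=K$ excluding terms containing an $\omega_{0,1}$, and $\omega_{g-1,n+1}$ is absent if $g=0$. Writing $\omega_{g,n}=\sum_{a_1,\ldots,a_n\ge0}F^{(g)}_{a_1,\ldots,a_n}\otimes_{i=1}^n\frac{dz_i}{z_i^{2a_i+2}}$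 defines the coefficients. $F^{\mathrm B(g)}$ are those for the Bessel curve $\mathsf y(z)=1/z$; $F^{\mathrm{BGW}(g)}$ those for the BGW curve $\mathsf y(z)=\frac1z+\sum_{a\ge0}\mathsf v_az^a$, with $\mathsf v_a$ formal variables (identity of formal power series in the $\mathsf v$'s). The Bessel coefficients $F^{\mathrm B(g)}_{a_1,\ldots,a_n}$ vanish unless $\sum a_i=g-1$. *)

theory Defs
  imports "HOL-Computational_Algebra.Formal_Laurent_Series" "HOL-Library.Sublist"
begin

text \<open>Finite-support sum: the sum of f over the (assumed finite) set of points of A where
  f does not vanish.  All infinite sums occurring in the topological recursion below are
  of this kind (they have finite support for the curves under consideration).\<close>
definition fsum :: "('b \<Rightarrow> 'a::comm_monoid_add) \<Rightarrow> 'b set \<Rightarrow> 'a" where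
  "fsum f A = sum f {x \<in> A. f x \<noteq> 0}"

text \<open>Spectral curves, x(z) = z^2/2, y given as a formal Laurent series in z.\<close>
definition bgw_y :: "(nat \<Rightarrow> 'a::field) \<Rightarrow> 'a fls" where
  "bgw_y v = fls_X_inv + fps_to_fls (Abs_fps v)"

definition bessel_y :: "'a::field fls" where
  "bessel_y = fls_X_inv"

text \<open>Coefficient of z1^(-2k-2) dz1 in the recursion kernel K(z1,w) (times dw):
  K(z1,w) = - dz1 / ((z1^2 - w^2)(y(w) - y(-w)) dw), with
  1/(z1^2-w^2) = sum_k w^(2k) z1^(-2k-2).\<close>
definition ker_coeff :: "'a::field fls \<Rightarrow> nat \<Rightarrow> 'a fls" where
  "ker_coeff y k = - (fls_X ^ (2*k)) / (y - fls_compose_fps y (- fps_X))"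

text \<open>Coefficient of w^p z^e dw dz in omega_{0,2}(w,z) = dw dz/(w-z)^2 expanded for |w| < |z|.\<close>
definition om02 :: "int \<Rightarrow> int \<Rightarrow> 'a::field" where
  "om02 p e = (if 0 \<le> p \<and> e = - p - 2 then of_int (p + 1) else 0)"

text \<open>A multidifferential omega_{g,n} is represented by its Laurent coefficient function:
  f g n [e1,...,en] is the coefficient of z1^e1 dz1 (x) ... (x) zn^en dzn.
  G f extends a table f of the stable omegas by omega_{0,2} (expanded with the first
  variable near 0).\<close>
definition Gom :: "(nat \<Rightarrow> nat \<Rightarrow> int list \<Rightarrow> 'a::field) \<Rightarrow> nat \<Rightarrow> nat \<Rightarrow> int list \<Rightarrow> 'a" where
  "Gom f h m es = (if h = 0 \<and> m = 2 then om02 (hd es) (hd (tl es)) else f h m es)"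

text \<open>B j is the coefficient of w^j dw^2 (x) prod_{i in K} z_i^{e_i} dz_i of the bracket
  [omega_{g-1,n+1}(w,-w,z_K) + sum' omega_{h,1+|J|}(w,z_J) omega_{h',1+|J'|}(-w,z_J')],
  using d(-w) = -dw; the residue at w = 0 is the coefficient of w^(-1).\<close>
definition ceo_step :: "'a::field fls \<Rightarrow> (nat \<Rightarrow> nat \<Rightarrow> int list \<Rightarrow> 'a) \<Rightarrow> nat \<Rightarrow> nat \<Rightarrow> int list \<Rightarrow> 'a" where
  "ceo_step y f g n e =
    (case e of [] \<Rightarrow> 0
     | e1 # eK \<Rightarrow>
       (let
          B1 = (\<lambda>j::int. if g = 0 then 0
                 else if g = 1 \<and> n = 1 then (if j = -2 then - 1/4 else 0)
                 else - fsum (\<lambda>p. (-1) ^ nat \<bar>j - p\<bar> * f (g - 1) (n + 1) (p # (j - p) # eK)) UNIV);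
          B2 = (\<lambda>j::int. \<Sum>J\<in>Pow {..<n-1}. \<Sum>h\<in>{..g}.
                 if (h = 0 \<and> J = {}) \<or> (h = g \<and> J = {..<n-1}) then 0
                 else - fsum (\<lambda>p. Gom f h (Suc (card J)) (p # nths eK J)
                          * (-1) ^ nat \<bar>j - p\<bar>
                          * Gom f (g - h) (Suc (n - 1 - card J)) ((j - p) # nths eK (- J))) UNIV)
        in if e1 \<le> -2 \<and> even e1
           then fsum (\<lambda>j. (B1 j + B2 j) * fls_nth (ker_coeff y (nat ((- e1 - 2) div 2))) (- 1 - j)) UNIV
           else 0))"

text \<open>omega_{g,n} for 2g-2+n > 0: the step only refers to strictly smaller 2g+n, so
  2g+n iterations starting from 0 give the recursively defined values.\<close>
definition ceo_omega :: "'a::field fls \<Rightarrow> nat \<Rightarrow> nat \<Rightarrow> int list \<Rightarrow> 'a" where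
  "ceo_omega y g n = ((ceo_step y ^^ (2*g + n)) (\<lambda>_ _ _. 0)) g n"

text \<open>F^{(g)}_{a_1..a_n}: coefficient of (x)_i dz_i / z_i^(2a_i+2) in omega_{g,n}.\<close>
definition Fcoef :: "'a::field fls \<Rightarrow> nat \<Rightarrow> nat list \<Rightarrow> 'a" where
  "Fcoef y g as = ceo_omega y g (length as) (map (\<lambda>a. - 2 * int a - 2) as)"

end

theory Submission
  imports Defs
begin

unbundle fps_syntax

definition Cv :: "(nat \<Rightarrow> 'a::field) \<Rightarrow> 'a fps" where
  "Cv v = Abs_fps (\<lambda>n. if n = 0 then 1 else if even n then v (n - 1) else 0)"

lemma Cv_0 [simp]: "Cv v $ 0 = 1" by (simp add: Cv_def)

lemma bgw_y_compose:
  "fls_compose_fps (bgw_y v) (- fps_X) = - fls_X_inv + fps_to_fls (Abs_fps (\<lambda>n. (-1)^n * v n))"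
proof -
  have H: "(- fps_X :: 'a fps) \<noteq> 0" "fps_nth (- fps_X :: 'a fps) 0 = 0" by simp_all
  have a: "fls_compose_fps (fls_X_inv :: 'a fls) (- fps_X) = - fls_X_inv"
  proof -
    have "fls_compose_fps (fls_X_inv :: 'a fls) (- fps_X) = fls_compose_fps (fls_shift 1 1) (- fps_X)"
      by (simp add: fls_X_inv_conv_shift_1)
    also have "\<dots> = fps_to_fls (- fps_X) powi (-1)"
      by (subst fls_compose_fps_shift) (use H in auto)
    also have "\<dots> = - fls_X_inv"
      by (simp add: power_int_minus fls_inverse_X)
    finally show ?thesis .
  qed
  show ?thesis unfolding bgw_y_def
    by (simp add: fls_compose_fps_add[OF H] a fps_compose_uminus')
qed

lemma bgw_D:
  "bgw_y v - fls_compose_fps (bgw_y v) (- fps_X) = fls_const 2 * fls_X_inv * fps_to_fls (Cv v)"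
proof (rule fls_eqI)
  fix m :: int
  show "(bgw_y v - fls_compose_fps (bgw_y v) (- fps_X)) $$ m = (fls_const 2 * fls_X_inv * fps_to_fls (Cv v)) $$ m"
  proof -
    have r: "(fls_const 2 * fls_X_inv * fps_to_fls (Cv v)) $$ m = 2 * (fps_to_fls (Cv v) $$ (m+1))"
    proof -
      have "fls_const 2 * fls_X_inv * fps_to_fls (Cv v) = fls_shift 1 (fls_const 2 * fps_to_fls (Cv v))"
        by (metis fls_X_inv_times_conv_shift(1) mult.left_commute mult.commute)
      then show ?thesis by simp
    qed
    show ?thesis
      unfolding bgw_y_compose r
      by (auto simp: bgw_y_def fps_to_fls_nth Cv_def nat_add_distrib  split: if_splits)
  qed
qed

definition Sinv :: "(nat \<Rightarrow> 'a::field) \<Rightarrow> 'a fps" where "Sinv v = inverse (Cv v)"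

lemma Cv_Sinv: "Cv v * Sinv v = 1"
  unfolding Sinv_def by (simp add: inverse_mult_eq_1')

lemma ker_eq:
  fixes v :: "nat \<Rightarrow> 'a::field_char_0"
  shows "ker_coeff (bgw_y v) k = - (fls_const (1/2) * fls_X ^ (2*k+1) * fps_to_fls (Sinv v))"
proof -
  let ?D = "fls_const 2 * fls_X_inv * fps_to_fls (Cv v) :: 'a fls"
  let ?Q = "fls_const (1/2) * fls_X * fps_to_fls (Sinv v) :: 'a fls"
  have "?D * ?Q = (fls_const 2 * fls_const (1/2)) * (fls_X_inv * fls_X) * (fps_to_fls (Cv v) * fps_to_fls (Sinv v))"
    by (simp add: ac_simps)
  also have "\<dots> = 1"
  proof -
    have 1: "fls_const 2 * fls_const (1/2) = (1::'a fls)" by (simp only: fls_const_mult_const) simp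
    have 2: "fls_X_inv * fls_X = (1::'a fls)" by (simp add: fls_X_inv_times_conv_shift fls_X_conv_shift_1)
    have 3: "fps_to_fls (Cv v) * fps_to_fls (Sinv v) = 1" by (simp add: fls_times_fps_to_fls[symmetric] Cv_Sinv)
    show ?thesis by (simp only: 1 2 3) simp
  qed
  finally have "?D * ?Q = 1" .
  hence inv: "inverse ?D = ?Q" by (metis inverse_unique)
  show ?thesis
    unfolding ker_coeff_def bgw_D divide_inverse inv
    by (simp add: ac_simps)
qed

lemma ker_nth:
  fixes v :: "nat \<Rightarrow> 'a::field_char_0"
  shows "ker_coeff (bgw_y v) k $$ m = (if int (2*k+1) \<le> m then - (1/2) * Sinv v $ nat (m - int (2*k+1)) else 0)"
proof -
  have "fls_const (1/2) * fls_X ^ (2*k+1) * fps_to_fls (Sinv v) = fls_const (1/2) * fls_shift (- int (2*k+1)) (fps_to_fls (Sinv v))"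
    by (simp only: mult.assoc fls_X_power_times_conv_shift(1))
  then show ?thesis unfolding ker_eq by (simp only: fls_uminus_nth fls_mult_const_nth fls_shift_nth fps_to_fls_nth) (auto simp: algebra_simps)
qed

lemma Sinv_odd:
  fixes v :: "nat \<Rightarrow> 'a::field"
  shows "odd n \<Longrightarrow> Sinv v $ n = 0"
proof (induction n rule: less_induct)
  case (less n)
  have n0: "n \<noteq> 0" using less.prems by (metis even_zero)
  have "(Cv v * Sinv v) $ n = 0" using n0 by (simp add: Cv_Sinv)
  hence eq: "(\<Sum>i=0..n. Cv v $ i * Sinv v $ (n - i)) = 0" by (simp add: fps_mult_nth)
  have "(\<Sum>i=0..n. Cv v $ i * Sinv v $ (n - i)) = Cv v $ 0 * Sinv v $ n + (\<Sum>i=1..n. Cv v $ i * Sinv v $ (n - i))"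
    using n0 by (simp add: sum.atLeast_Suc_atMost)
  moreover have "(\<Sum>i=1..n. Cv v $ i * Sinv v $ (n - i)) = 0"
  proof (rule sum.neutral, intro ballI)
    fix i assume i: "i \<in> {1..n}"
    show "Cv v $ i * Sinv v $ (n - i) = 0"
    proof (cases "even i")
      case True
      hence "odd (n - i)" using less.prems i by auto
      moreover have "n - i < n" using i by auto
      ultimately show ?thesis using less.IH by simp
    next
      case False hence "i \<noteq> 0" by (metis even_zero)
      with False show ?thesis by (simp add: Cv_def)
    qed
  qed
  ultimately show ?case using eq by simp
qed

definition sig :: "(nat \<Rightarrow> 'a::field) \<Rightarrow> nat \<Rightarrow> 'a" where "sig v d = Sinv v $ (2*d)"
definition cc :: "(nat \<Rightarrow> 'a::field) \<Rightarrow> nat \<Rightarrow> 'a" where "cc v b = (if b = 0 then 1 else v (2*b - 1))"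

lemma sum_even_odd: "(\<Sum>i=0..2*e. f i) = (\<Sum>d\<le>e. f (2*d)) + (\<Sum>d<e. f (2*d+1 :: nat)) "
proof (induction e)
  case 0 then show ?case by simp
next
  case (Suc e)
  have "{0..2*Suc e} = insert (2*e+2) (insert (2*e+1) {0..2*e})" by auto
  then show ?case using Suc by (simp add: add.commute add.left_commute)
qed

lemma sig_cc: "(\<Sum>d\<le>e. sig v d * cc v (e - d)) = (if e = 0 then 1 else 0)"
proof -
  have "(Sinv v * Cv v) $ (2*e) = (if e = 0 then 1 else 0)"
    by (simp add: Cv_Sinv mult.commute)
  hence "(\<Sum>i=0..2*e. Sinv v $ i * Cv v $ (2*e - i)) = (if e = 0 then 1 else 0)"
    by (simp add: fps_mult_nth)
  moreover have "(\<Sum>i=0..2*e. Sinv v $ i * Cv v $ (2*e - i)) = (\<Sum>d\<le>e. sig v d * cc v (e - d))"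
  proof -
    have "(\<Sum>d<e. Sinv v $ (2*d+1) * Cv v $ (2*e - (2*d+1))) = 0"
      by (rule sum.neutral) (simp add: Sinv_odd)
    moreover have "\<And>d. d \<le> e \<Longrightarrow> Sinv v $ (2*d) * Cv v $ (2*e - 2*d) = sig v d * cc v (e - d)"
      by (auto simp: sig_def cc_def Cv_def right_diff_distrib' mult_2 diff_add_inverse)
    ultimately show ?thesis by (simp add: sum_even_odd)
  qed
  ultimately show ?thesis by simp
qed


definition stab :: "nat \<Rightarrow> nat \<Rightarrow> bool" where "stab g n \<longleftrightarrow> 2*g + n > 2 \<and> n \<ge> 1"

lemma Gom_cong: "(h = 0 \<and> m = 2) \<or> f h m = f' h m \<Longrightarrow> Gom f h m = Gom f' h m"
  unfolding Gom_def by (rule ext) auto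

lemma step_local:
  assumes n1: "n \<ge> 1" and agree: "\<And>g' n'. 2*g'+n' < 2*g+n \<Longrightarrow> stab g' n' \<Longrightarrow> f g' n' = f' g' n'"
  shows "ceo_step y f g n e = ceo_step y f' g n e"
proof (cases e)
  case Nil then show ?thesis by (simp add: ceo_step_def)
next
  case (Cons e1 eK)
  have B1: "f (g - 1) (n + 1) = f' (g - 1) (n + 1)" if "g \<noteq> 0" "\<not> (g = 1 \<and> n = 1)"
    using that n1 by (intro agree) (auto simp: stab_def)
  have B2: "Gom f h (Suc (card J)) = Gom f' h (Suc (card J)) \<and>
            Gom f (g - h) (Suc (n - 1 - card J)) = Gom f' (g - h) (Suc (n - 1 - card J))"
    if J: "J \<in> Pow {..<n-1}" and h: "h \<in> {..g}" and ne: "\<not> ((h = 0 \<and> J = {}) \<or> (h = g \<and> J = {..<n-1}))" for J h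
  proof -
    have fin: "finite J" using J finite_subset by auto
    have cJ: "card J \<le> n - 1" using J by (metis PowD card_lessThan card_mono finite_lessThan)
    have cJ2: "card J = n - 1 \<Longrightarrow> J = {..<n-1}" using J by (metis PowD card_lessThan card_subset_eq finite_lessThan)
    have cJ0: "card J = 0 \<Longrightarrow> J = {}" using fin by simp
    show ?thesis
    proof
      show "Gom f h (Suc (card J)) = Gom f' h (Suc (card J))"
      proof (rule Gom_cong)
        show "(h = 0 \<and> Suc (card J) = 2) \<or> f h (Suc (card J)) = f' h (Suc (card J))"
        proof (cases "h = 0 \<and> Suc (card J) = 2")
          case False
          have "stab h (Suc (card J))" using False ne cJ0 h by (auto simp: stab_def)
          moreover have "2*h + Suc (card J) < 2*g + n"
          proof (cases "h = g")
            case True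
            hence "card J \<noteq> n - 1" using ne cJ2 by blast
            thus ?thesis using True cJ n1 by linarith
          next
            case False thus ?thesis using h cJ n1 by auto
          qed
          ultimately show ?thesis using agree by blast
        qed simp
      qed
      show "Gom f (g - h) (Suc (n - 1 - card J)) = Gom f' (g - h) (Suc (n - 1 - card J))"
      proof (rule Gom_cong)
        show "(g - h = 0 \<and> Suc (n - 1 - card J) = 2) \<or> f (g - h) (Suc (n - 1 - card J)) = f' (g - h) (Suc (n - 1 - card J))"
        proof (cases "g - h = 0 \<and> Suc (n - 1 - card J) = 2")
          case False
          have "stab (g - h) (Suc (n - 1 - card J))"
          proof (cases "g - h = 0")
            case True
            hence "h = g" using h by auto
            hence "card J \<noteq> n - 1" using ne cJ2 by blast
            thus ?thesis using True False cJ unfolding stab_def by linarith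
          next
            case False thus ?thesis unfolding stab_def by linarith
          qed
          moreover have "2*(g - h) + Suc (n - 1 - card J) < 2*g + n"
          proof (cases "h = 0")
            case True
            hence "card J \<noteq> 0" using ne cJ0 by blast
            thus ?thesis using True cJ n1 by linarith
          next
            case False thus ?thesis using h cJ n1 by auto
          qed
          ultimately show ?thesis using agree by blast
        qed simp
      qed
    qed
  qed
  show ?thesis
    unfolding ceo_step_def Cons list.case Let_def
    apply (intro if_cong refl arg_cong2[where f = fsum] ext arg_cong2[where f = "(*)"] arg_cong2[where f = "(+)"])
    subgoal using B1 by (simp del: One_nat_def)
    apply (rule sum.cong[OF refl])
    apply (rule sum.cong[OF refl])
    subgoal for j J h using B2[of J h] by simp
    done
qed

lemma omega_iter:
  "stab g n \<Longrightarrow> k \<ge> 2*g+n \<Longrightarrow> (ceo_step y ^^ k) (\<lambda>_ _ _. 0) g n = ceo_omega y g n"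
proof (induction "2*g+n" arbitrary: g n k rule: less_induct)
  case less
  obtain k' where k: "k = Suc k'" using less.prems by (cases k) (auto simp: stab_def)
  obtain s where s: "2*g+n = Suc s" using less.prems by (cases "2*g+n") (auto simp: stab_def)
  have n1: "n \<ge> 1" using less.prems by (simp add: stab_def)
  have agree: "(ceo_step y ^^ k') (\<lambda>_ _ _. 0) g' n' = (ceo_step y ^^ s) (\<lambda>_ _ _. 0) g' n'"
    if "2*g'+n' < 2*g+n" "stab g' n'" for g' n'
    using less.hyps[OF that(1) that(2)] that less.prems k s by simp
  have "(ceo_step y ^^ k) (\<lambda>_ _ _. 0) g n = ceo_step y ((ceo_step y ^^ k') (\<lambda>_ _ _. 0)) g n"
    by (simp add: k)
  also have "\<dots> = ceo_step y ((ceo_step y ^^ s) (\<lambda>_ _ _. 0)) g n"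
    by (rule ext, rule step_local[OF n1 agree])
  also have "\<dots> = ceo_omega y g n" by (simp add: ceo_omega_def s)
  finally show ?case .
qed

lemma omega_rec:
  assumes "stab g n" shows "ceo_omega y g n = ceo_step y (ceo_omega y) g n"
proof -
  obtain s where s: "2*g+n = Suc s" using assms by (cases "2*g+n") (auto simp: stab_def)
  have n1: "n \<ge> 1" using assms by (simp add: stab_def)
  have "ceo_omega y g n = ceo_step y ((ceo_step y ^^ s) (\<lambda>_ _ _. 0)) g n"
    by (simp add: ceo_omega_def s)
  also have "\<dots> = ceo_step y (ceo_omega y) g n"
    by (rule ext, rule step_local[OF n1], rule omega_iter) (use s in auto)
  finally show ?thesis .
qed

lemma omega_unstable:
  assumes "\<not> stab g n" "n \<ge> 1" shows "ceo_omega y g n = (\<lambda>_. 0)"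
proof -
  have cases: "(g = 0 \<and> n = 1) \<or> (g = 0 \<and> n = 2)" using assms by (auto simp: stab_def)
  show ?thesis
  proof (rule ext)
    fix e
    show "ceo_omega y g n e = 0"
      using cases
    proof
      assume a: "g = 0 \<and> n = 1"
      show ?thesis using a unfolding ceo_omega_def
        by (simp add: ceo_step_def fsum_def split: list.split)
    next
      assume a: "g = 0 \<and> n = 2"
      have p: "Pow {0::nat} = {{}, {0}}" by auto
      have q: "{..<Suc (Suc 0) - 1} = {0::nat}" by auto
      show ?thesis using a unfolding ceo_omega_def
        by (simp add: ceo_step_def fsum_def p q numeral_2_eq_2 lessThan_Suc split: list.split)
    qed
  qed
qed


definition enc :: "nat \<Rightarrow> int" where "enc a = - 2 * int a - 2"
definition dec :: "int \<Rightarrow> nat" where "dec e = nat ((- e - 2) div 2)"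

lemma enc_inj: "inj enc" by (auto simp: inj_def enc_def)
lemma enc_eq_iff [simp]: "enc a = enc b \<longleftrightarrow> a = b" by (auto simp: enc_def)
lemma range_enc: "e \<in> range enc \<longleftrightarrow> e \<le> -2 \<and> even e"
proof
  assume "e \<in> range enc" then show "e \<le> -2 \<and> even e" by (auto simp: enc_def)
next
  assume a: "e \<le> -2 \<and> even e"
  then obtain t where t: "e = 2 * t" by (auto elim: evenE)
  have "e = enc (nat (- t - 1))" using a t by (simp add: enc_def)
  then show "e \<in> range enc" by blast
qed
lemma dec_enc [simp]: "dec (enc a) = a" by (simp add: dec_def enc_def)
lemma enc_dec: "e \<in> range enc \<Longrightarrow> enc (dec e) = e" by auto

lemma fsum_eq_sum:
  assumes "finite S" "S \<subseteq> A" "\<And>x. x \<in> A \<Longrightarrow> x \<notin> S \<Longrightarrow> f x = 0"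
  shows "fsum f A = sum f S"
proof -
  have "{x \<in> A. f x \<noteq> 0} \<subseteq> S" using assms by auto
  then have "sum f {x \<in> A. f x \<noteq> 0} = sum f S"
    using assms by (intro sum.mono_neutral_left) auto
  then show ?thesis by (simp add: fsum_def)
qed

lemma fsum_zero: "(\<And>x. x \<in> A \<Longrightarrow> f x = 0) \<Longrightarrow> fsum f A = 0"
  by (simp add: fsum_def)

lemma fsum_single: "a \<in> A \<Longrightarrow> (\<And>x. x \<in> A \<Longrightarrow> x \<noteq> a \<Longrightarrow> f x = 0) \<Longrightarrow> fsum f A = f a"
  using fsum_eq_sum[of "{a}" A f] by auto

lemma enc_minus_enc: "a < k \<Longrightarrow> enc k - enc a = enc (k - 1 - a)"
  by (simp add: enc_def of_nat_diff)

lemma sign_enc: "(-1::'a::ring_1) ^ nat \<bar>enc k - enc a\<bar> = 1"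
proof -
  have "even (nat \<bar>enc k - enc a\<bar>)" by (simp add: enc_def even_nat_iff)
  then show ?thesis by simp
qed

lemma fsum_C:
  fixes f :: "int \<Rightarrow> int \<Rightarrow> 'a::field"
  assumes supp: "\<And>p q. f p q \<noteq> 0 \<Longrightarrow> p \<in> range enc \<and> q \<in> range enc"
  shows "fsum (\<lambda>p. (-1) ^ nat \<bar>enc k - p\<bar> * f p (enc k - p)) UNIV = (\<Sum>a<k. f (enc a) (enc (k - 1 - a)))"
proof -
  have "fsum (\<lambda>p. (-1) ^ nat \<bar>enc k - p\<bar> * f p (enc k - p)) UNIV
        = sum (\<lambda>p. (-1) ^ nat \<bar>enc k - p\<bar> * f p (enc k - p)) (enc ` {..<k})"
  proof (rule fsum_eq_sum)
    fix p assume p: "p \<notin> enc ` {..<k}"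
    show "(-1) ^ nat \<bar>enc k - p\<bar> * f p (enc k - p) = 0"
    proof (rule ccontr)
      assume "\<not> ?thesis"
      then have "f p (enc k - p) \<noteq> 0" by auto
      then obtain a a' where "p = enc a" "enc k - p = enc a'" using supp by blast
      then have "p = enc a" "a < k" by (auto simp: enc_def)
      with p show False by auto
    qed
  qed auto
  also have "\<dots> = (\<Sum>a<k. (-1) ^ nat \<bar>enc k - enc a\<bar> * f (enc a) (enc k - enc a))"
    by (subst sum.reindex) (auto simp: inj_on_def)
  also have "\<dots> = (\<Sum>a<k. f (enc a) (enc (k - 1 - a)))"
    by (rule sum.cong[OF refl], subst sign_enc) (simp add: enc_minus_enc)
  finally show ?thesis .
qed

lemma fsum_A:
  fixes R :: "int \<Rightarrow> 'a::field"
  assumes supp: "\<And>q. R q \<noteq> 0 \<Longrightarrow> q \<in> range enc"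
  shows "fsum (\<lambda>p. om02 p e * (-1) ^ nat \<bar>enc k - p\<bar> * R (enc k - p)) UNIV
       = (if e \<in> range enc then of_nat (2 * dec e + 1) * R (enc (k + dec e)) else 0)"
proof -
  let ?p0 = "- e - 2"
  have "fsum (\<lambda>p. om02 p e * (-1) ^ nat \<bar>enc k - p\<bar> * R (enc k - p)) UNIV
      = om02 ?p0 e * (-1) ^ nat \<bar>enc k - ?p0\<bar> * R (enc k - ?p0)"
    by (rule fsum_single) (auto simp: om02_def)
  also have "\<dots> = (if e \<in> range enc then of_nat (2 * dec e + 1) * R (enc (k + dec e)) else 0)"
  proof (cases "e \<in> range enc")
    case True
    then obtain a where a: "e = enc a" by auto
    have "enc k - ?p0 = enc (k + a)" using a by (simp add: enc_def)
    moreover have "even (nat \<bar>enc k - ?p0\<bar>)" using a by (simp add: enc_def even_nat_iff)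
    moreover have "om02 ?p0 e = (of_nat (2 * a + 1) :: 'a)" using a by (simp add: om02_def enc_def)
    ultimately show ?thesis using a True by simp
  next
    case False
    show ?thesis
    proof (cases "?p0 \<ge> 0")
      case True
      with False have "odd e" by (auto simp: range_enc)
      hence "odd (enc k - ?p0)" by (simp add: enc_def)
      hence "enc k - ?p0 \<notin> range enc" by (auto simp: range_enc)
      hence "R (enc k - ?p0) = 0" using supp by blast
      then show ?thesis using False by simp
    next
      case f2: False
      then show ?thesis using False by (simp add: om02_def)
    qed
  qed
  finally show ?thesis .
qed

lemma fsum_B:
  fixes L :: "int \<Rightarrow> 'a::field"
  assumes supp: "\<And>q. L q \<noteq> 0 \<Longrightarrow> q \<in> range enc"
  shows "fsum (\<lambda>p. L p * (-1) ^ nat \<bar>enc k - p\<bar> * om02 (enc k - p) e) UNIV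
       = (if e \<in> range enc then of_nat (2 * dec e + 1) * L (enc (k + dec e)) else 0)"
proof -
  let ?p0 = "enc k + e + 2"
  have "fsum (\<lambda>p. L p * (-1) ^ nat \<bar>enc k - p\<bar> * om02 (enc k - p) e) UNIV
      = L ?p0 * (-1) ^ nat \<bar>enc k - ?p0\<bar> * om02 (enc k - ?p0) e"
    by (rule fsum_single) (auto simp: om02_def)
  also have "\<dots> = (if e \<in> range enc then of_nat (2 * dec e + 1) * L (enc (k + dec e)) else 0)"
  proof (cases "e \<in> range enc")
    case True
    then obtain a where a: "e = enc a" by auto
    have "?p0 = enc (k + a)" using a by (simp add: enc_def)
    moreover have "even (nat \<bar>enc k - ?p0\<bar>)" using a by (simp add: enc_def even_nat_iff)
    moreover have "om02 (enc k - ?p0) e = (of_nat (2 * a + 1) :: 'a)" using a by (simp add: om02_def enc_def)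
    ultimately show ?thesis using a True by simp
  next
    case False
    show ?thesis
    proof (cases "- e - 2 \<ge> 0")
      case True
      with False have "odd e" by (auto simp: range_enc)
      hence "odd ?p0" by (simp add: enc_def)
      hence "?p0 \<notin> range enc" by (auto simp: range_enc)
      hence "L ?p0 = 0" using supp by blast
      then show ?thesis using False by simp
    next
      case f2: False
      then show ?thesis using False by (simp add: om02_def)
    qed
  qed
  finally show ?thesis .
qed

lemma fsum_AB:
  "fsum (\<lambda>p. om02 p e * (-1) ^ nat \<bar>enc k - p\<bar> * om02 (enc k - p) e') UNIV = (0::'a::field)"
  by (rule fsum_zero) (auto simp: om02_def enc_def)


lemma pair_stab:
  assumes J: "J \<in> Pow {..<n-1}" and h: "h \<le> g" and n1: "n \<ge> 1"
    and ne: "\<not> ((h = 0 \<and> J = {}) \<or> (h = g \<and> J = {..<n-1}))"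
  shows "\<not> (h = 0 \<and> card J = 1) \<Longrightarrow> stab h (Suc (card J)) \<and> 2*h + Suc (card J) < 2*g + n"
    and "\<not> (g - h = 0 \<and> n - 1 - card J = 1) \<Longrightarrow> stab (g - h) (Suc (n - 1 - card J)) \<and> 2*(g - h) + Suc (n - 1 - card J) < 2*g + n"
proof -
  have fin: "finite J" using J finite_subset by auto
  have cJ: "card J \<le> n - 1" using J by (metis PowD card_lessThan card_mono finite_lessThan)
  have cJ2: "card J = n - 1 \<Longrightarrow> J = {..<n-1}" using J by (metis PowD card_lessThan card_subset_eq finite_lessThan)
  have cJ0: "card J = 0 \<Longrightarrow> J = {}" using fin by simp
  {
    assume nA: "\<not> (h = 0 \<and> card J = 1)"
    have "stab h (Suc (card J))"
    proof (cases "h = 0")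
      case True
      hence "card J \<noteq> 0" using ne cJ0 by blast
      thus ?thesis using True nA unfolding stab_def by linarith
    qed (auto simp: stab_def)
    moreover have "2*h + Suc (card J) < 2*g + n"
    proof (cases "h = g")
      case True
      hence "card J \<noteq> n - 1" using ne cJ2 by blast
      thus ?thesis using True cJ n1 by linarith
    next
      case False thus ?thesis using h cJ n1 by auto
    qed
    ultimately show "stab h (Suc (card J)) \<and> 2*h + Suc (card J) < 2*g + n" ..
  }
  {
    assume nB: "\<not> (g - h = 0 \<and> n - 1 - card J = 1)"
    have "stab (g - h) (Suc (n - 1 - card J))"
    proof (cases "g - h = 0")
      case True
      hence "h = g" using h by auto
      hence "card J \<noteq> n - 1" using ne cJ2 by blast
      thus ?thesis using True nB cJ unfolding stab_def by linarith
    next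
      case False thus ?thesis unfolding stab_def by linarith
    qed
    moreover have "2*(g - h) + Suc (n - 1 - card J) < 2*g + n"
    proof (cases "h = 0")
      case True
      hence "card J \<noteq> 0" using ne cJ0 by blast
      thus ?thesis using True cJ n1 by linarith
    next
      case False thus ?thesis using h cJ n1 by auto
    qed
    ultimately show "stab (g - h) (Suc (n - 1 - card J)) \<and> 2*(g - h) + Suc (n - 1 - card J) < 2*g + n" ..
  }
qed

lemma length_nths_sub:
  assumes "J \<subseteq> {..<length xs}"
  shows "length (nths xs J) = card J" "length (nths xs (-J)) = length xs - card J"
proof -
  have "{i. i < length xs \<and> i \<in> J} = J" using assms by auto
  then show "length (nths xs J) = card J" by (simp add: length_nths)
  have "{i. i < length xs \<and> i \<in> -J} = {..<length xs} - J" by auto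
  moreover have "card ({..<length xs} - J) = length xs - card J"
    using assms by (simp add: card_Diff_subset finite_subset)
  ultimately show "length (nths xs (-J)) = length xs - card J" by (simp add: length_nths)
qed

definition B1f :: "(nat \<Rightarrow> nat \<Rightarrow> int list \<Rightarrow> 'a::field) \<Rightarrow> nat \<Rightarrow> nat \<Rightarrow> int list \<Rightarrow> int \<Rightarrow> 'a" where
  "B1f f g n eK j = (if g = 0 then 0
                 else if g = 1 \<and> n = 1 then (if j = -2 then - 1/4 else 0)
                 else - fsum (\<lambda>p. (-1) ^ nat \<bar>j - p\<bar> * f (g - 1) (n + 1) (p # (j - p) # eK)) UNIV)"

definition B2f :: "(nat \<Rightarrow> nat \<Rightarrow> int list \<Rightarrow> 'a::field) \<Rightarrow> nat \<Rightarrow> nat \<Rightarrow> int list \<Rightarrow> int \<Rightarrow> 'a" where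
  "B2f f g n eK j = (\<Sum>J\<in>Pow {..<n-1}. \<Sum>h\<in>{..g}.
                 if (h = 0 \<and> J = {}) \<or> (h = g \<and> J = {..<n-1}) then 0
                 else - fsum (\<lambda>p. Gom f h (Suc (card J)) (p # nths eK J)
                          * (-1) ^ nat \<bar>j - p\<bar>
                          * Gom f (g - h) (Suc (n - 1 - card J)) ((j - p) # nths eK (- J))) UNIV)"

lemma step_alt:
  "ceo_step y f g n (e1 # eK) = (if e1 \<le> -2 \<and> even e1
     then fsum (\<lambda>j. (B1f f g n eK j + B2f f g n eK j) * fls_nth (ker_coeff y (nat ((- e1 - 2) div 2))) (- 1 - j)) UNIV
     else 0)"
  unfolding ceo_step_def B1f_def B2f_def Let_def by simp

definition B1sum :: "(nat \<Rightarrow> nat \<Rightarrow> int list \<Rightarrow> 'a::field) \<Rightarrow> nat \<Rightarrow> nat \<Rightarrow> int list \<Rightarrow> nat \<Rightarrow> 'a" where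
  "B1sum f g n eK k = (if g = 0 then 0 else if g = 1 \<and> n = 1 then (if k = 0 then 1/4 else 0)
     else (\<Sum>a<k. f (g - 1) (n + 1) (enc a # enc (k - 1 - a) # eK)))"

definition itemv :: "(nat \<Rightarrow> nat \<Rightarrow> int list \<Rightarrow> 'a::field) \<Rightarrow> nat \<Rightarrow> nat \<Rightarrow> nat \<Rightarrow> int list \<Rightarrow> nat set \<Rightarrow> nat \<Rightarrow> 'a" where
  "itemv f g n k eK J h =
   (if (h = 0 \<and> J = {}) \<or> (h = g \<and> J = {..<n-1}) then 0
    else if h = 0 \<and> card J = 1 then
      (if g - h = 0 \<and> n - 1 - card J = 1 then 0
       else (if hd (nths eK J) \<in> range enc
             then of_nat (2 * dec (hd (nths eK J)) + 1) * f (g - h) (Suc (n - 1 - card J)) (enc (k + dec (hd (nths eK J))) # nths eK (-J))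
             else 0))
    else if g - h = 0 \<and> n - 1 - card J = 1 then
      (if hd (nths eK (-J)) \<in> range enc
       then of_nat (2 * dec (hd (nths eK (-J))) + 1) * f h (Suc (card J)) (enc (k + dec (hd (nths eK (-J)))) # nths eK J)
       else 0)
    else (\<Sum>a<k. f h (Suc (card J)) (enc a # nths eK J) * f (g - h) (Suc (n - 1 - card J)) (enc (k - 1 - a) # nths eK (-J))))"

definition Supp :: "(nat \<Rightarrow> nat \<Rightarrow> int list \<Rightarrow> 'a::zero) \<Rightarrow> nat \<Rightarrow> nat \<Rightarrow> bool" where
  "Supp f g n \<longleftrightarrow> (\<forall>es. length es = n \<longrightarrow> f g n es \<noteq> 0 \<longrightarrow> set es \<subseteq> range enc)"

lemma B1_eval:
  assumes st: "stab g n" and len: "length eK = n - 1"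
    and supp: "\<And>g' n'. stab g' n' \<Longrightarrow> 2*g'+n' < 2*g+n \<Longrightarrow> Supp f g' n'"
  shows "B1f f g n eK (enc k) = - B1sum f g n eK k"
proof -
  consider "g = 0" | "g = 1 \<and> n = 1" | "g \<noteq> 0" "\<not> (g = 1 \<and> n = 1)" by blast
  then show ?thesis
  proof cases
    case 1 then show ?thesis by (simp add: B1f_def B1sum_def)
  next
    case 2 then show ?thesis by (simp add: B1f_def B1sum_def enc_def)
  next
    case 3
    have c1: "(g = 0) = False" and c2: "(g = 1 \<and> n = 1) = False" using 3 by auto
    have n1: "n \<ge> 1" using st by (simp add: stab_def)
    have S: "Supp f (g - 1) (n + 1)" using 3 n1 by (intro supp) (auto simp: stab_def)
    have "fsum (\<lambda>p. (-1) ^ nat \<bar>enc k - p\<bar> * f (g - 1) (n + 1) (p # (enc k - p) # eK)) UNIV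
          = (\<Sum>a<k. f (g - 1) (n + 1) (enc a # enc (k - 1 - a) # eK))"
    proof (rule fsum_C)
      fix p q assume "f (g - 1) (n + 1) (p # q # eK) \<noteq> 0"
      then show "p \<in> range enc \<and> q \<in> range enc"
        using S len n1 unfolding Supp_def by (metis Suc_eq_plus1 le_add_diff_inverse2 length_Cons list.set_intros(1) list.set_intros(2) subsetD)
    qed
    moreover have "B1f f g n eK (enc k) = - fsum (\<lambda>p. (-1) ^ nat \<bar>enc k - p\<bar> * f (g - 1) (n + 1) (p # (enc k - p) # eK)) UNIV"
      using 3 unfolding B1f_def c1 c2 if_False by simp
    moreover have "B1sum f g n eK k = (\<Sum>a<k. f (g - 1) (n + 1) (enc a # enc (k - 1 - a) # eK))"
      using 3 unfolding B1sum_def c1 c2 if_False by simp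
    ultimately show ?thesis by simp
  qed
qed

lemma Supp_head:
  assumes "Supp f g' m" "length xs + 1 = m" "f g' m (p # xs) \<noteq> 0"
  shows "p \<in> range enc"
proof -
  have "\<forall>es. length es = m \<longrightarrow> f g' m es \<noteq> 0 \<longrightarrow> set es \<subseteq> range enc" using assms(1) unfolding Supp_def .
  then have "set (p # xs) \<subseteq> range enc" using assms(2,3) by (metis Suc_eq_plus1 length_Cons)
  then show ?thesis by auto
qed

lemma Gom_f: "\<not> (h = 0 \<and> m = 2) \<Longrightarrow> Gom f h m = f h m"
  by (rule ext) (auto simp: Gom_def)
lemma Gom_o: "h = 0 \<and> m = 2 \<Longrightarrow> Gom f h m = (\<lambda>es. om02 (hd es) (hd (tl es)))"
  by (rule ext) (simp add: Gom_def)

lemma item_eval: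
  assumes st: "stab g n" and len: "length eK = n - 1"
    and supp: "\<And>g' n'. stab g' n' \<Longrightarrow> 2*g'+n' < 2*g+n \<Longrightarrow> Supp f g' n'"
    and J: "J \<in> Pow {..<n-1}" and h: "h \<le> g"
  shows "(if (h = 0 \<and> J = {}) \<or> (h = g \<and> J = {..<n-1}) then 0
          else - fsum (\<lambda>p. Gom f h (Suc (card J)) (p # nths eK J)
                          * (-1) ^ nat \<bar>enc k - p\<bar>
                          * Gom f (g - h) (Suc (n - 1 - card J)) ((enc k - p) # nths eK (- J))) UNIV)
         = - itemv f g n k eK J h"
proof (cases "(h = 0 \<and> J = {}) \<or> (h = g \<and> J = {..<n-1})")
  case True then show ?thesis by (simp add: itemv_def)
next
  case ne: False
  have c0: "((h = 0 \<and> J = {}) \<or> (h = g \<and> J = {..<n-1})) = False" using ne by simp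
  have n1: "n \<ge> 1" using st by (simp add: stab_def)
  have Jsub: "J \<subseteq> {..<length eK}" using J len by auto
  have lJ: "length (nths eK J) = card J" and lcJ: "length (nths eK (-J)) = n - 1 - card J"
    using length_nths_sub[OF Jsub] len by auto
  note ps = pair_stab[OF J h n1 ne]
  show ?thesis
  proof (cases "h = 0 \<and> card J = 1")
    case A: True
    show ?thesis
    proof (cases "g - h = 0 \<and> n - 1 - card J = 1")
      case True
      have "fsum (\<lambda>p. Gom f h (Suc (card J)) (p # nths eK J) * (-1) ^ nat \<bar>enc k - p\<bar>
                 * Gom f (g - h) (Suc (n - 1 - card J)) ((enc k - p) # nths eK (- J))) UNIV
            = fsum (\<lambda>p. om02 p (hd (nths eK J)) * (-1) ^ nat \<bar>enc k - p\<bar> * om02 (enc k - p) (hd (nths eK (-J)))) UNIV"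
        using A True by (simp add: Gom_o)
      also have "\<dots> = 0" by (rule fsum_AB)
      finally show ?thesis
        unfolding itemv_def c0 if_False using A True by simp
    next
      case nB: False
      have stR: "stab (g - h) (Suc (n - 1 - card J))" "2*(g - h) + Suc (n - 1 - card J) < 2*g + n"
        using ps(2)[OF nB] by auto
      have SR: "Supp f (g - h) (Suc (n - 1 - card J))" using supp stR by blast
      have "fsum (\<lambda>p. Gom f h (Suc (card J)) (p # nths eK J) * (-1) ^ nat \<bar>enc k - p\<bar>
                 * Gom f (g - h) (Suc (n - 1 - card J)) ((enc k - p) # nths eK (- J))) UNIV
            = fsum (\<lambda>p. om02 p (hd (nths eK J)) * (-1) ^ nat \<bar>enc k - p\<bar> * f (g - h) (Suc (n - 1 - card J)) ((enc k - p) # nths eK (-J))) UNIV"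
      proof -
        have "Gom f h (Suc (card J)) = (\<lambda>es. om02 (hd es) (hd (tl es)))" using A by (intro Gom_o) simp
        moreover have "Gom f (g - h) (Suc (n - 1 - card J)) = f (g - h) (Suc (n - 1 - card J))" using nB by (intro Gom_f) simp
        ultimately show ?thesis by simp
      qed
      also have "\<dots> = (if hd (nths eK J) \<in> range enc then of_nat (2 * dec (hd (nths eK J)) + 1)
                        * f (g - h) (Suc (n - 1 - card J)) (enc (k + dec (hd (nths eK J))) # nths eK (-J)) else 0)"
        by (rule fsum_A[where R = "\<lambda>q. f (g - h) (Suc (n - 1 - card J)) (q # nths eK (-J))"])
           (rule Supp_head[OF SR], use lcJ in auto)
      finally have calc: "fsum (\<lambda>p. Gom f h (Suc (card J)) (p # nths eK J) * (-1) ^ nat \<bar>enc k - p\<bar>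
                 * Gom f (g - h) (Suc (n - 1 - card J)) ((enc k - p) # nths eK (- J))) UNIV = (if hd (nths eK J) \<in> range enc then of_nat (2 * dec (hd (nths eK J)) + 1)
                        * f (g - h) (Suc (n - 1 - card J)) (enc (k + dec (hd (nths eK J))) # nths eK (-J)) else 0)" .
      have c1: "(h = 0 \<and> card J = 1) = True" "(g - h = 0 \<and> n - 1 - card J = 1) = False" using A nB by simp_all
      show ?thesis
        unfolding itemv_def c0 c1 if_False if_True calc by (rule refl)
    qed
  next
    case nA: False
    have stL: "stab h (Suc (card J))" "2*h + Suc (card J) < 2*g + n"
      using ps(1)[OF nA] by auto
    have SL: "Supp f h (Suc (card J))" using supp stL by blast
    show ?thesis
    proof (cases "g - h = 0 \<and> n - 1 - card J = 1")
      case B: True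
      have "fsum (\<lambda>p. Gom f h (Suc (card J)) (p # nths eK J) * (-1) ^ nat \<bar>enc k - p\<bar>
                 * Gom f (g - h) (Suc (n - 1 - card J)) ((enc k - p) # nths eK (- J))) UNIV
            = fsum (\<lambda>p. f h (Suc (card J)) (p # nths eK J) * (-1) ^ nat \<bar>enc k - p\<bar> * om02 (enc k - p) (hd (nths eK (-J)))) UNIV"
      proof -
        have "Gom f (g - h) (Suc (n - 1 - card J)) = (\<lambda>es. om02 (hd es) (hd (tl es)))" using B by (intro Gom_o) simp
        moreover have "Gom f h (Suc (card J)) = f h (Suc (card J))" using nA by (intro Gom_f) simp
        ultimately show ?thesis by simp
      qed
      also have "\<dots> = (if hd (nths eK (-J)) \<in> range enc then of_nat (2 * dec (hd (nths eK (-J))) + 1)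
                        * f h (Suc (card J)) (enc (k + dec (hd (nths eK (-J)))) # nths eK J) else 0)"
        by (rule fsum_B[where L = "\<lambda>q. f h (Suc (card J)) (q # nths eK J)"])
           (rule Supp_head[OF SL], use lJ in auto)
      finally have calc: "fsum (\<lambda>p. Gom f h (Suc (card J)) (p # nths eK J) * (-1) ^ nat \<bar>enc k - p\<bar>
                 * Gom f (g - h) (Suc (n - 1 - card J)) ((enc k - p) # nths eK (- J))) UNIV = (if hd (nths eK (-J)) \<in> range enc then of_nat (2 * dec (hd (nths eK (-J))) + 1)
                        * f h (Suc (card J)) (enc (k + dec (hd (nths eK (-J)))) # nths eK J) else 0)" .
      have c1: "(h = 0 \<and> card J = 1) = False" "(g - h = 0 \<and> n - 1 - card J = 1) = True" using nA B by simp_all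
      show ?thesis
        unfolding itemv_def c0 c1 if_False if_True calc by (rule refl)
    next
      case nB: False
      have stR: "stab (g - h) (Suc (n - 1 - card J))" "2*(g - h) + Suc (n - 1 - card J) < 2*g + n"
        using ps(2)[OF nB] by auto
      have SR: "Supp f (g - h) (Suc (n - 1 - card J))" using supp stR by blast
      have "fsum (\<lambda>p. Gom f h (Suc (card J)) (p # nths eK J) * (-1) ^ nat \<bar>enc k - p\<bar>
                 * Gom f (g - h) (Suc (n - 1 - card J)) ((enc k - p) # nths eK (- J))) UNIV
            = fsum (\<lambda>p. (-1) ^ nat \<bar>enc k - p\<bar> * ((\<lambda>p q. f h (Suc (card J)) (p # nths eK J) * f (g - h) (Suc (n - 1 - card J)) (q # nths eK (-J))) p (enc k - p))) UNIV"
      proof -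
        have "Gom f (g - h) (Suc (n - 1 - card J)) = f (g - h) (Suc (n - 1 - card J))" using nB by (intro Gom_f) simp
        moreover have "Gom f h (Suc (card J)) = f h (Suc (card J))" using nA by (intro Gom_f) simp
        ultimately show ?thesis by (simp add: ac_simps)
      qed
      also have "\<dots> = (\<Sum>a<k. f h (Suc (card J)) (enc a # nths eK J) * f (g - h) (Suc (n - 1 - card J)) (enc (k - 1 - a) # nths eK (-J)))"
      proof (rule fsum_C)
        fix p q assume "f h (Suc (card J)) (p # nths eK J) * f (g - h) (Suc (n - 1 - card J)) (q # nths eK (-J)) \<noteq> 0"
        then show "p \<in> range enc \<and> q \<in> range enc"
          using Supp_head[OF SL, of "nths eK J" p] Supp_head[OF SR, of "nths eK (-J)" q] lJ lcJ by auto
      qed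
      finally have calc: "fsum (\<lambda>p. Gom f h (Suc (card J)) (p # nths eK J) * (-1) ^ nat \<bar>enc k - p\<bar>
                 * Gom f (g - h) (Suc (n - 1 - card J)) ((enc k - p) # nths eK (- J))) UNIV = (\<Sum>a<k. f h (Suc (card J)) (enc a # nths eK J) * f (g - h) (Suc (n - 1 - card J)) (enc (k - 1 - a) # nths eK (-J)))" .
      have c1: "(h = 0 \<and> card J = 1) = False" "(g - h = 0 \<and> n - 1 - card J = 1) = False" using nA nB by simp_all
      show ?thesis
        unfolding itemv_def c0 c1 if_False if_True calc by (rule refl)
    qed
  qed
qed

lemma B2_eval:
  assumes st: "stab g n" and len: "length eK = n - 1"
    and supp: "\<And>g' n'. stab g' n' \<Longrightarrow> 2*g'+n' < 2*g+n \<Longrightarrow> Supp f g' n'"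
  shows "B2f f g n eK (enc k) = - (\<Sum>J\<in>Pow {..<n-1}. \<Sum>h\<in>{..g}. itemv f g n k eK J h)"
  unfolding B2f_def sum_negf[symmetric]
  by (rule sum.cong[OF refl], rule sum.cong[OF refl], rule item_eval[OF st len supp]) auto

definition PhiInt :: "(nat \<Rightarrow> nat \<Rightarrow> int list \<Rightarrow> 'a::field) \<Rightarrow> nat \<Rightarrow> nat \<Rightarrow> int list \<Rightarrow> nat \<Rightarrow> 'a" where
  "PhiInt f g n eK k = (1/2) * (B1sum f g n eK k + (\<Sum>J\<in>Pow {..<n-1}. \<Sum>h\<in>{..g}. itemv f g n k eK J h))"

lemma B_eval:
  fixes f :: "nat \<Rightarrow> nat \<Rightarrow> int list \<Rightarrow> 'a::field_char_0"
  assumes st: "stab g n" and len: "length eK = n - 1"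
    and supp: "\<And>g' n'. stab g' n' \<Longrightarrow> 2*g'+n' < 2*g+n \<Longrightarrow> Supp f g' n'"
  shows "B1f f g n eK (enc k) + B2f f g n eK (enc k) = - 2 * PhiInt f g n eK k"
  using B1_eval[OF st len supp, of k] B2_eval[OF st len supp, of k] unfolding PhiInt_def by simp

lemma step_eval:
  fixes v :: "nat \<Rightarrow> 'a::field_char_0"
  assumes st: "stab g n" and len: "length eK = n - 1"
    and supp: "\<And>g' n'. stab g' n' \<Longrightarrow> 2*g'+n' < 2*g+n \<Longrightarrow> Supp f g' n'"
    and van: "\<And>k'. K0 \<le> k' \<Longrightarrow> PhiInt f g n eK k' = 0"
  shows "ceo_step (bgw_y v) f g n (e1 # eK) =
           (if e1 \<in> range enc then (\<Sum>d<K0. sig v d * PhiInt f g n eK (dec e1 + d)) else 0)"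
proof (cases "e1 \<in> range enc")
  case False
  have nc: "(e1 \<le> -2 \<and> even e1) = False" using False range_enc by blast
  show ?thesis unfolding step_alt nc if_False using False by simp
next
  case True
  then obtain k where e1: "e1 = enc k" by auto
  have kk: "nat ((- e1 - 2) div 2) = k" using e1 by (simp add: enc_def)
  let ?T = "\<lambda>j. (B1f f g n eK j + B2f f g n eK j) * fls_nth (ker_coeff (bgw_y v) k) (- 1 - j)"
  have "fsum ?T UNIV = sum ?T ((\<lambda>d. enc (k + d)) ` {..<K0})"
  proof (rule fsum_eq_sum)
    fix j assume j: "j \<notin> (\<lambda>d. enc (k + d)) ` {..<K0}"
    show "?T j = 0"
    proof (rule ccontr)
      assume nz: "?T j \<noteq> 0"
      hence kn: "fls_nth (ker_coeff (bgw_y v) k) (- 1 - j) \<noteq> 0" by auto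
      hence le: "int (2*k+1) \<le> - 1 - j" and sn: "Sinv v $ nat (- 1 - j - int (2*k+1)) \<noteq> 0"
        by (auto simp: ker_nth split: if_splits)
      have "even (nat (- 1 - j - int (2*k+1)))" using sn Sinv_odd by blast
      then obtain d where d: "nat (- 1 - j - int (2*k+1)) = 2 * d" by (auto elim: evenE)
      have jd: "j = enc (k + d)" using d le using enc_def by simp
      have "d \<ge> K0" using j jd by auto
      hence "B1f f g n eK j + B2f f g n eK j = 0"
        using B_eval[OF st len supp, of "k + d"] van[of "k + d"] jd by simp
      with nz show False by simp
    qed
  qed auto
  also have "\<dots> = (\<Sum>d<K0. ?T (enc (k + d)))"
    by (subst sum.reindex) (auto simp: inj_on_def)
  also have "\<dots> = (\<Sum>d<K0. sig v d * PhiInt f g n eK (k + d))"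
  proof (rule sum.cong[OF refl])
    fix d
    have "fls_nth (ker_coeff (bgw_y v) k) (- 1 - enc (k + d)) = - (1/2) * sig v d"
    proof -
      have "- 1 - enc (k + d) - int (2*k+1) = int (2 * d)" by (simp add: enc_def)
      moreover have "nat (int (2 * d)) = 2 * d" by simp
      ultimately show ?thesis by (simp only: ker_nth sig_def) simp
    qed
    then show "?T (enc (k + d)) = sig v d * PhiInt f g n eK (k + d)"
      using B_eval[OF st len supp, of "k + d"] by simp
  qed
  finally have calc: "fsum ?T UNIV = (\<Sum>d<K0. sig v d * PhiInt f g n eK (k + d))" .
  have c: "(e1 \<le> -2 \<and> even e1) = True" using True range_enc by blast
  show ?thesis unfolding step_alt c if_True kk calc using True e1 by simp
qed


lemma nths_restrict: "nths xs A = nths xs (A \<inter> {..<length xs})"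
proof (induction xs arbitrary: A)
  case Nil then show ?case by simp
next
  case (Cons x xs)
  have "{j. Suc j \<in> A \<inter> {..<length (x # xs)}} = {j. Suc j \<in> A} \<inter> {..<length xs}" by auto
  then show ?case using Cons[of "{j. Suc j \<in> A}"] by (simp add: nths_Cons)
qed

lemma nths_cong_len: "A \<inter> {..<length xs} = B \<inter> {..<length xs} \<Longrightarrow> nths xs A = nths xs B"
  by (metis nths_restrict)

lemma nths_sing: "i < length xs \<Longrightarrow> nths xs {i} = [xs ! i]"
proof (induction xs arbitrary: i)
  case Nil then show ?case by simp
next
  case (Cons x xs)
  show ?case
  proof (cases i)
    case 0
    have "{j. Suc j \<in> {i}} = {}" using 0 by auto
    then show ?thesis using 0 by (simp add: nths_Cons)
  next
    case (Suc i')
    have "{j. Suc j \<in> {i}} = {i'}" using Suc by auto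
    then show ?thesis using Suc Cons by (simp add: nths_Cons)
  qed
qed

lemma sum_nths_split: "sum_list (nths xs J) + sum_list (nths xs (-J)) = sum_list (xs :: nat list)"
proof (induction xs arbitrary: J)
  case Nil then show ?case by simp
next
  case (Cons x xs)
  have "{j. Suc j \<in> - J} = - {j. Suc j \<in> J}" by auto
  then show ?case using Cons[of "{j. Suc j \<in> J}"] by (auto simp: nths_Cons)
qed

lemma sum_card1:
  "(\<Sum>J\<in>Pow {..<m::nat}. if card J = 1 then G J else 0) = (\<Sum>i<m. G {i})"
proof -
  have "(\<Sum>J\<in>Pow {..<m}. if card J = 1 then G J else 0) = (\<Sum>J\<in>{J\<in>Pow {..<m}. card J = 1}. G J)"
    by (rule sum.inter_filter[symmetric]) simp
  also have "{J\<in>Pow {..<m}. card J = 1} = (\<lambda>i. {i}) ` {..<m}"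
    by (auto simp: card_Suc_eq) 
  also have "sum G ((\<lambda>i. {i}) ` {..<m}) = (\<Sum>i<m. G {i})"
    by (subst sum.reindex) (auto simp: inj_on_def)
  finally show ?thesis .
qed

lemma sum_Pow_compl:
  "(\<Sum>J\<in>Pow {..<m::nat}. G J) = (\<Sum>J\<in>Pow {..<m}. G ({..<m} - J))"
proof -
  have bij: "bij_betw (\<lambda>J. {..<m} - J) (Pow {..<m}) (Pow {..<m})"
    by (rule bij_betw_byWitness[where f' = "\<lambda>J. {..<m} - J"]) auto
  show ?thesis using sum.reindex_bij_betw[OF bij, of G] by simp
qed

lemma sum_cocard1:
  "(\<Sum>J\<in>Pow {..<m::nat}. if m - card J = 1 then G J else 0) = (\<Sum>i<m. G ({..<m} - {i}))"
proof -
  have "(\<Sum>J\<in>Pow {..<m::nat}. if m - card J = 1 then G J else 0)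
       = (\<Sum>J\<in>Pow {..<m::nat}. if m - card ({..<m} - J) = 1 then G ({..<m} - J) else 0)"
    by (rule sum_Pow_compl)
  also have "\<dots> = (\<Sum>J\<in>Pow {..<m::nat}. if card J = 1 then G ({..<m} - J) else 0)"
  proof (rule sum.cong[OF refl])
    fix J assume "J \<in> Pow {..<m}"
    hence "card ({..<m} - J) = m - card J" "card J \<le> m"
      by (auto simp: card_Diff_subset finite_subset card_mono[of "{..<m}" J, simplified])
    then show "(if m - card ({..<m} - J) = 1 then G ({..<m} - J) else 0) = (if card J = 1 then G ({..<m} - J) else 0)"
      by auto
  qed
  also have "\<dots> = (\<Sum>i<m. G ({..<m} - {i}))" by (rule sum_card1)
  finally show ?thesis .
qed

definition Fv :: "(nat \<Rightarrow> 'a::field) \<Rightarrow> nat \<Rightarrow> nat list \<Rightarrow> 'a" where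
  "Fv v g as = ceo_omega (bgw_y v) g (length as) (map enc as)"

lemma Om_Fv: "length xs = m \<Longrightarrow> ceo_omega (bgw_y v) g m (map enc xs) = Fv v g xs"
  by (simp add: Fv_def)

lemma Fv_unstable: assumes "\<not> stab g (length as)" "as \<noteq> []" shows "Fv v g as = 0"
proof -
  have "length as \<ge> 1" using assms by (cases as) auto
  then show ?thesis using assms by (simp add: Fv_def omega_unstable)
qed

lemma Fv_0_small: "length as \<le> 2 \<Longrightarrow> as \<noteq> [] \<Longrightarrow> Fv v 0 as = 0"
  by (rule Fv_unstable) (auto simp: stab_def)

definition Phi :: "(nat \<Rightarrow> nat list \<Rightarrow> 'a::field) \<Rightarrow> nat \<Rightarrow> nat \<Rightarrow> nat list \<Rightarrow> 'a" where
  "Phi Fn g k aK = (if g = 0 then 0 else (1/2) * (\<Sum>a<k. Fn (g - 1) (a # (k - 1 - a) # aK)))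
     + (1/2) * (\<Sum>J\<in>Pow {..<length aK}. \<Sum>h\<in>{..g}. \<Sum>a<k. Fn h (a # nths aK J) * Fn (g - h) ((k - 1 - a) # nths aK (-J)))
     + (\<Sum>i<length aK. of_nat (2 * aK ! i + 1) * Fn g ((k + aK ! i) # nths aK (-{i})))
     + (if g = 1 \<and> aK = [] \<and> k = 0 then 1/8 else 0)"

lemma itemv_enc:
  assumes st: "stab g n" and n: "n = Suc (length aK)" and J: "J \<in> Pow {..<length aK}" and h: "h \<le> g"
  shows "itemv (ceo_omega (bgw_y v)) g n k (map enc aK) J h =
           (\<Sum>a<k. Fv v h (a # nths aK J) * Fv v (g - h) ((k - 1 - a) # nths aK (-J)))
         + (if h = 0 \<and> card J = 1 then of_nat (2 * hd (nths aK J) + 1) * Fv v g ((k + hd (nths aK J)) # nths aK (-J)) else 0)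
         + (if h = g \<and> length aK - card J = 1 then of_nat (2 * hd (nths aK (-J)) + 1) * Fv v g ((k + hd (nths aK (-J))) # nths aK J) else 0)"
    (is "?L = ?P + ?A + ?B")
proof -
  let ?m = "length aK"
  have Jsub: "J \<subseteq> {..<length aK}" using J by auto
  have lJ: "length (nths aK J) = card J" and lcJ: "length (nths aK (-J)) = ?m - card J"
    using length_nths_sub[OF Jsub] by auto
  have cJ: "card J \<le> ?m" using Jsub by (metis card_lessThan card_mono finite_lessThan)
  have nm: "n - 1 = ?m" using n by simp
  have mapJ: "nths (map enc aK) J = map enc (nths aK J)" "nths (map enc aK) (-J) = map enc (nths aK (-J))"
    by (simp_all add: nths_map)
  have OL: "ceo_omega (bgw_y v) h' (Suc (card J)) (enc a # map enc (nths aK J)) = Fv v h' (a # nths aK J)" for h' a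
  proof -
    have e: "length (a # nths aK J) = Suc (card J)" using lJ by simp
    show ?thesis using Om_Fv[OF e, of v h'] by (simp only: list.map)
  qed
  have OR: "ceo_omega (bgw_y v) h' (Suc (n - 1 - card J)) (enc a # map enc (nths aK (-J))) = Fv v h' (a # nths aK (-J))" for h' a
  proof -
    have e: "length (a # nths aK (-J)) = Suc (n - 1 - card J)" using lcJ nm by simp
    show ?thesis using Om_Fv[OF e, of v h'] by (simp only: list.map)
  qed
  have zL0: "Fv v 0 (a # nths aK J) = 0" if "card J \<le> 1" for a
    by (rule Fv_0_small) (use lJ that in auto)
  have zR0: "Fv v 0 (a # nths aK (-J)) = 0" if "?m - card J \<le> 1" for a
    by (rule Fv_0_small) (use lcJ that in auto)
  consider (ex) "(h = 0 \<and> J = {}) \<or> (h = g \<and> J = {..<n-1})"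
    | (AB) "\<not> ((h = 0 \<and> J = {}) \<or> (h = g \<and> J = {..<n-1}))" "h = 0 \<and> card J = 1" "g - h = 0 \<and> n - 1 - card J = 1"
    | (A) "\<not> ((h = 0 \<and> J = {}) \<or> (h = g \<and> J = {..<n-1}))" "h = 0 \<and> card J = 1" "\<not> (g - h = 0 \<and> n - 1 - card J = 1)"
    | (B) "\<not> ((h = 0 \<and> J = {}) \<or> (h = g \<and> J = {..<n-1}))" "\<not> (h = 0 \<and> card J = 1)" "g - h = 0 \<and> n - 1 - card J = 1"
    | (C) "\<not> ((h = 0 \<and> J = {}) \<or> (h = g \<and> J = {..<n-1}))" "\<not> (h = 0 \<and> card J = 1)" "\<not> (g - h = 0 \<and> n - 1 - card J = 1)"
    by blast
  then show ?thesis
  proof cases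
    case ex
    have L0: "?L = 0" using ex unfolding itemv_def by simp
    show ?thesis
    proof (cases "h = 0 \<and> J = {}")
      case True
      have "?P = 0" using True zL0 by simp
      moreover have "?A = 0" using True by simp
      moreover have "?B = 0"
      proof (cases "h = g \<and> ?m - card J = 1")
        case True2: True
        hence "g = 0" using True by simp
        then show ?thesis using True True2 zL0 by simp
      qed auto
      ultimately show ?thesis using L0 by simp
    next
      case False
      hence hg: "h = g" "J = {..<?m}" using ex nm by auto
      have cm: "card J = ?m" using hg by simp
      have "?P = 0" using hg cm zR0 by simp
      moreover have "?B = 0" using cm by simp
      moreover have "?A = 0"
      proof (cases "h = 0 \<and> card J = 1")
        case True
        hence "g = 0" "length (nths aK (-J)) = 0" using hg cm lcJ by auto
        then show ?thesis using True by (simp add: Fv_0_small)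
      qed auto
      ultimately show ?thesis using L0 by simp
    qed
  next
    case AB
    have L0: "?L = 0" using AB unfolding itemv_def by simp
    have g0: "g = 0" "h = 0" "card J = 1" "?m - card J = 1" using AB nm h by auto
    have "?P = 0" using g0 zL0 by simp
    moreover have "?A = 0" using g0 lcJ by (simp add: Fv_0_small)
    moreover have "?B = 0" using g0 lJ by (simp add: Fv_0_small)
    ultimately show ?thesis using L0 by simp
  next
    case A
    have c: "(h = 0 \<and> card J = 1) = True" "(g - h = 0 \<and> n - 1 - card J = 1) = False"
            "((h = 0 \<and> J = {}) \<or> (h = g \<and> J = {..<n-1})) = False" using A by auto
    have ne: "nths aK J \<noteq> []" using lJ A by auto
    have hd1: "hd (nths (map enc aK) J) = enc (hd (nths aK J))" using ne by (simp add: nths_map hd_map)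
    have "?L = of_nat (2 * hd (nths aK J) + 1) * Fv v (g - h) ((k + hd (nths aK J)) # nths aK (-J))"
      unfolding itemv_def c if_True if_False hd1 using OR by (simp add: mapJ)
    moreover have "?P = 0" using A zL0 by simp
    moreover have "?B = 0" using A nm h by auto
    ultimately show ?thesis using A by simp
  next
    case B
    have c: "(h = 0 \<and> card J = 1) = False" "(g - h = 0 \<and> n - 1 - card J = 1) = True"
            "((h = 0 \<and> J = {}) \<or> (h = g \<and> J = {..<n-1})) = False" using B by auto
    have ne: "nths aK (-J) \<noteq> []" using lcJ B nm by auto
    have hd1: "hd (nths (map enc aK) (-J)) = enc (hd (nths aK (-J)))" using ne by (simp add: nths_map hd_map)
    have hg: "h = g" using B h by auto
    have "?L = of_nat (2 * hd (nths aK (-J)) + 1) * Fv v h ((k + hd (nths aK (-J))) # nths aK J)"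
      unfolding itemv_def c if_True if_False hd1 using OL by (simp add: mapJ)
    moreover have "?P = 0" using B hg zR0 nm by simp
    moreover have "?A = 0" using B by auto
    ultimately show ?thesis using B hg nm by simp
  next
    case C
    have c: "(h = 0 \<and> card J = 1) = False" "(g - h = 0 \<and> n - 1 - card J = 1) = False"
            "((h = 0 \<and> J = {}) \<or> (h = g \<and> J = {..<n-1})) = False" using C by auto
    have "?L = ?P"
      unfolding itemv_def c if_True if_False using OL OR by (simp add: mapJ)
    moreover have "?A = 0" using C by auto
    moreover have "?B = 0" using C nm h by auto
    ultimately show ?thesis by simp
  qed
qed

lemma sum_if_eq_h: "h0 \<in> A \<Longrightarrow> finite A \<Longrightarrow> (\<Sum>h\<in>A. if h = h0 \<and> c then X else 0) = (if c then X else 0)"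
  by (cases c) (simp_all add: sum.delta)

lemma PhiInt_enc:
  fixes v :: "nat \<Rightarrow> 'a::field_char_0"
  assumes st: "stab g n" and n: "n = Suc (length aK)"
  shows "PhiInt (ceo_omega (bgw_y v)) g n (map enc aK) k = Phi (Fv v) g k aK"
proof -
  let ?m = "length aK"
  let ?P = "\<lambda>J h. (\<Sum>a<k. Fv v h (a # nths aK J) * Fv v (g - h) ((k - 1 - a) # nths aK (-J)))"
  let ?A = "\<lambda>J h. (if h = 0 \<and> card J = 1 then of_nat (2 * hd (nths aK J) + 1) * Fv v g ((k + hd (nths aK J)) # nths aK (-J)) else 0)"
  let ?B = "\<lambda>J h. (if h = g \<and> ?m - card J = 1 then of_nat (2 * hd (nths aK (-J)) + 1) * Fv v g ((k + hd (nths aK (-J))) # nths aK J) else 0)"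
  let ?T3 = "(\<Sum>i<?m. of_nat (2 * aK ! i + 1) * Fv v g ((k + aK ! i) # nths aK (-{i})))"
  have nm: "n - 1 = ?m" using n by simp
  have items: "(\<Sum>J\<in>Pow {..<n-1}. \<Sum>h\<in>{..g}. itemv (ceo_omega (bgw_y v)) g n k (map enc aK) J h)
        = (\<Sum>J\<in>Pow {..<?m}. \<Sum>h\<in>{..g}. ?P J h) + (\<Sum>J\<in>Pow {..<?m}. \<Sum>h\<in>{..g}. ?A J h) + (\<Sum>J\<in>Pow {..<?m}. \<Sum>h\<in>{..g}. ?B J h)"
    unfolding nm by (simp add: itemv_enc[OF st n] sum.distrib)
  have sA: "(\<Sum>J\<in>Pow {..<?m}. \<Sum>h\<in>{..g}. ?A J h) = ?T3"
  proof -
    have "(\<Sum>J\<in>Pow {..<?m}. \<Sum>h\<in>{..g}. ?A J h) = (\<Sum>J\<in>Pow {..<?m}. if card J = 1 then of_nat (2 * hd (nths aK J) + 1) * Fv v g ((k + hd (nths aK J)) # nths aK (-J)) else 0)"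
      by (rule sum.cong[OF refl], rule sum_if_eq_h) auto
    also have "\<dots> = ?T3" by (subst sum_card1) (simp add: nths_sing)
    finally show ?thesis .
  qed
  have sB: "(\<Sum>J\<in>Pow {..<?m}. \<Sum>h\<in>{..g}. ?B J h) = ?T3"
  proof -
    have "(\<Sum>J\<in>Pow {..<?m}. \<Sum>h\<in>{..g}. ?B J h) = (\<Sum>J\<in>Pow {..<?m}. if ?m - card J = 1 then of_nat (2 * hd (nths aK (-J)) + 1) * Fv v g ((k + hd (nths aK (-J))) # nths aK J) else 0)"
      by (rule sum.cong[OF refl], rule sum_if_eq_h) auto
    also have "\<dots> = (\<Sum>i<?m. of_nat (2 * hd (nths aK (- ({..<?m} - {i}))) + 1) * Fv v g ((k + hd (nths aK (- ({..<?m} - {i})))) # nths aK ({..<?m} - {i})))"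
      by (rule sum_cocard1)
    also have "\<dots> = ?T3"
    proof (rule sum.cong[OF refl])
      fix i assume i: "i \<in> {..<?m}"
      have "nths aK (- ({..<?m} - {i})) = nths aK {i}" by (rule nths_cong_len) (use i in auto)
      hence 1: "nths aK (- ({..<?m} - {i})) = [aK ! i]" using i by (simp add: nths_sing)
      have 2: "nths aK ({..<?m} - {i}) = nths aK (-{i})" by (rule nths_cong_len) auto
      show "of_nat (2 * hd (nths aK (- ({..<?m} - {i}))) + 1) * Fv v g ((k + hd (nths aK (- ({..<?m} - {i})))) # nths aK ({..<?m} - {i}))
            = of_nat (2 * aK ! i + 1) * Fv v g ((k + aK ! i) # nths aK (-{i}))"
        unfolding 1 2 by simp
    qed
    finally show ?thesis .
  qed
  have b1: "(1/2) * B1sum (ceo_omega (bgw_y v)) g n (map enc aK) k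
          = (if g = 0 then 0 else (1/2) * (\<Sum>a<k. Fv v (g - 1) (a # (k - 1 - a) # aK)))
            + (if g = 1 \<and> aK = [] \<and> k = 0 then 1/8 else 0)"
  proof -
    consider "g = 0" | "g = 1 \<and> n = 1" | "g \<noteq> 0" "\<not> (g = 1 \<and> n = 1)" by blast
    then show ?thesis
    proof cases
      case 1 then show ?thesis by (simp add: B1sum_def)
    next
      case 2
      hence aK: "aK = []" using n by simp
      have "Fv v 0 [a, k - 1 - a] = 0" for a by (rule Fv_0_small) auto
      then show ?thesis using 2 aK by (simp add: B1sum_def)
    next
      case 3
      have c1: "(g = 0) = False" and c2: "(g = 1 \<and> n = 1) = False" using 3 by auto
      have c3: "(g = 1 \<and> aK = [] \<and> k = 0) = False" using 3 n by auto
      have "ceo_omega (bgw_y v) (g - 1) (n + 1) (enc a # enc (k - 1 - a) # map enc aK) = Fv v (g - 1) (a # (k - 1 - a) # aK)" for a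
      proof -
        have e: "length (a # (k - 1 - a) # aK) = n + 1" using n by simp
        show ?thesis using Om_Fv[OF e, of v "g - 1"] by (simp only: list.map)
      qed
      then show ?thesis unfolding B1sum_def c1 c2 c3 if_False by simp
    qed
  qed
  show ?thesis
    unfolding PhiInt_def Phi_def distrib_left b1 items sA sB
    by (simp add: algebra_simps)
qed


lemma Supp_zero:
  assumes "Supp f g' m" "length xs + 1 = m" "x \<in> set xs" "x \<notin> range enc"
  shows "f g' m (p # xs) = 0"
proof (rule ccontr)
  assume "f g' m (p # xs) \<noteq> 0"
  hence "set (p # xs) \<subseteq> range enc" using assms(1,2) unfolding Supp_def by (metis Suc_eq_plus1 length_Cons)
  with assms(3,4) show False by auto
qed

lemma hd_len1: "length xs = 1 \<Longrightarrow> x \<in> set xs \<Longrightarrow> hd xs = x"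
  by (cases xs) auto

lemma itemv_nonenc:
  assumes st: "stab g n" and len: "length eK = n - 1"
    and supp: "\<And>g' n'. stab g' n' \<Longrightarrow> 2*g'+n' < 2*g+n \<Longrightarrow> Supp f g' n'"
    and J: "J \<in> Pow {..<n-1}" and h: "h \<le> g"
    and x: "x \<in> set eK" "x \<notin> range enc"
  shows "itemv f g n k eK J h = 0"
proof -
  have n1: "n \<ge> 1" using st by (simp add: stab_def)
  have Jsub: "J \<subseteq> {..<length eK}" using J len by auto
  have lJ: "length (nths eK J) = card J" and lcJ: "length (nths eK (-J)) = n - 1 - card J"
    using length_nths_sub[OF Jsub] len by auto
  obtain i where i: "i < length eK" "eK ! i = x" using x by (auto simp: in_set_conv_nth)
  have xJ: "x \<in> set (nths eK J) \<or> x \<in> set (nths eK (-J))"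
    using i by (cases "i \<in> J") (auto simp: set_nths)
  show ?thesis
  proof (cases "(h = 0 \<and> J = {}) \<or> (h = g \<and> J = {..<n-1})")
    case True then show ?thesis by (simp add: itemv_def)
  next
    case ne: False
    note ps = pair_stab[OF J h n1 ne]
    show ?thesis
    proof (cases "h = 0 \<and> card J = 1")
      case A: True
      show ?thesis
      proof (cases "g - h = 0 \<and> n - 1 - card J = 1")
        case True
        have c: "((h = 0 \<and> J = {}) \<or> (h = g \<and> J = {..<n-1})) = False"
          "(h = 0 \<and> card J = 1) = True" "(g - h = 0 \<and> n - 1 - card J = 1) = True" using ne A True by auto
        show ?thesis unfolding itemv_def c if_True if_False by simp
      next
        case nB: False
        have SR: "Supp f (g - h) (Suc (n - 1 - card J))" using supp ps(2)[OF nB] by blast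
        have "hd (nths eK J) \<notin> range enc \<or> f (g - h) (Suc (n - 1 - card J)) (enc (k + dec (hd (nths eK J))) # nths eK (-J)) = 0"
        proof (cases "x \<in> set (nths eK J)")
          case True
          hence "hd (nths eK J) = x" using hd_len1 lJ A by metis
          then show ?thesis using x by simp
        next
          case False
          hence "x \<in> set (nths eK (-J))" using xJ by simp
          then show ?thesis using Supp_zero[OF SR _ _ x(2)] lcJ by simp
        qed
        moreover have c: "((h = 0 \<and> J = {}) \<or> (h = g \<and> J = {..<n-1})) = False"
          "(h = 0 \<and> card J = 1) = True" "(g - h = 0 \<and> n - 1 - card J = 1) = False" using ne A nB by auto
        ultimately show ?thesis unfolding itemv_def c if_True if_False by (simp split: if_split)
      qed
    next
      case nA: False
      have SL: "Supp f h (Suc (card J))" using supp ps(1)[OF nA] by blast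
      show ?thesis
      proof (cases "g - h = 0 \<and> n - 1 - card J = 1")
        case B: True
        have "hd (nths eK (-J)) \<notin> range enc \<or> f h (Suc (card J)) (enc (k + dec (hd (nths eK (-J)))) # nths eK J) = 0"
        proof (cases "x \<in> set (nths eK (-J))")
          case True
          hence "hd (nths eK (-J)) = x" using hd_len1 lcJ B by metis
          then show ?thesis using x by simp
        next
          case False
          hence "x \<in> set (nths eK J)" using xJ by simp
          then show ?thesis using Supp_zero[OF SL _ _ x(2)] lJ by simp
        qed
        moreover have c: "((h = 0 \<and> J = {}) \<or> (h = g \<and> J = {..<n-1})) = False"
          "(h = 0 \<and> card J = 1) = False" "(g - h = 0 \<and> n - 1 - card J = 1) = True" using ne nA B by auto
        ultimately show ?thesis unfolding itemv_def c if_True if_False by (simp split: if_split)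
      next
        case nB: False
        have SR: "Supp f (g - h) (Suc (n - 1 - card J))" using supp ps(2)[OF nB] by blast
        have "f h (Suc (card J)) (enc a # nths eK J) * f (g - h) (Suc (n - 1 - card J)) (enc (k - 1 - a) # nths eK (-J)) = 0" for a
        proof (cases "x \<in> set (nths eK J)")
          case True
          then show ?thesis using Supp_zero[OF SL _ _ x(2)] lJ by simp
        next
          case False
          hence "x \<in> set (nths eK (-J))" using xJ by simp
          then show ?thesis using Supp_zero[OF SR _ _ x(2)] lcJ by simp
        qed
        moreover have c: "((h = 0 \<and> J = {}) \<or> (h = g \<and> J = {..<n-1})) = False"
          "(h = 0 \<and> card J = 1) = False" "(g - h = 0 \<and> n - 1 - card J = 1) = False" using ne nA nB by auto
        ultimately show ?thesis unfolding itemv_def c if_True if_False by (intro sum.neutral ballI) blast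
      qed
    qed
  qed
qed

lemma PhiInt_nonenc:
  assumes st: "stab g n" and len: "length eK = n - 1"
    and supp: "\<And>g' n'. stab g' n' \<Longrightarrow> 2*g'+n' < 2*g+n \<Longrightarrow> Supp f g' n'"
    and ne: "\<not> set eK \<subseteq> range enc"
  shows "PhiInt f g n eK k = 0"
proof -
  obtain x where x: "x \<in> set eK" "x \<notin> range enc" using ne by auto
  have n1: "n \<ge> 1" using st by (simp add: stab_def)
  have "B1sum f g n eK k = 0"
  proof -
    consider "g = 0" | "g = 1 \<and> n = 1" | "g \<noteq> 0" "\<not> (g = 1 \<and> n = 1)" by blast
    then show ?thesis
    proof cases
      case 1 then show ?thesis by (simp add: B1sum_def)
    next
      case 2 then show ?thesis using len x by simp
    next
      case 3
      have S: "Supp f (g - 1) (n + 1)" using 3 n1 by (intro supp) (auto simp: stab_def)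
      have "f (g - 1) (n + 1) (enc a # enc (k - 1 - a) # eK) = 0" for a
        using Supp_zero[OF S, of "enc (k - 1 - a) # eK" x] x len n1 by simp
      moreover have c1: "(g = 0) = False" and c2: "(g = 1 \<and> n = 1) = False" using 3 by auto
      ultimately show ?thesis unfolding B1sum_def c1 c2 if_False by simp
    qed
  qed
  moreover have "itemv f g n k eK J h = 0" if "J \<in> Pow {..<n-1}" "h \<in> {..g}" for J h
    using itemv_nonenc[OF st len supp _ _ x] that by simp
  ultimately show ?thesis unfolding PhiInt_def by simp
qed


lemma Phi_deg:
  fixes v :: "nat \<Rightarrow> 'a::field_char_0"
  assumes deg: "\<And>g' as. 2*g' + length as < 2*g + Suc (length aK) \<Longrightarrow> Fv v g' as \<noteq> 0 \<Longrightarrow> sum_list as + 3 \<le> 3*g' + length as"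
    and nz: "Phi (Fv v) g k aK \<noteq> 0"
  shows "k + sum_list aK + 3 \<le> 3*g + Suc (length aK)"
proof (rule ccontr)
  assume big: "\<not> ?thesis"
  let ?m = "length aK" and ?S = "sum_list aK"
  have p1: "Fv v (g - 1) (a # (k - 1 - a) # aK) = 0" if "g \<noteq> 0" "a < k" for a
  proof (rule ccontr)
    assume "Fv v (g - 1) (a # (k - 1 - a) # aK) \<noteq> 0"
    from deg[OF _ this] that have "a + (k - 1 - a) + ?S + 3 \<le> 3*(g-1) + Suc (Suc ?m)" by simp
    with that big show False by linarith
  qed
  have p2: "Fv v h (a # nths aK J) * Fv v (g - h) ((k - 1 - a) # nths aK (-J)) = 0"
    if J: "J \<in> Pow {..<?m}" and h: "h \<in> {..g}" and a: "a < k" for J h a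
  proof (rule ccontr)
    assume "\<not> ?thesis"
    hence L: "Fv v h (a # nths aK J) \<noteq> 0" and R: "Fv v (g - h) ((k - 1 - a) # nths aK (-J)) \<noteq> 0" by auto
    have Jsub: "J \<subseteq> {..<length aK}" using J by auto
    have lJ: "length (nths aK J) = card J" and lcJ: "length (nths aK (-J)) = ?m - card J"
      using length_nths_sub[OF Jsub] by auto
    have cJ: "card J \<le> ?m" using Jsub by (metis card_lessThan card_mono finite_lessThan)
    have nexA: "\<not> (h = 0 \<and> card J = 0)"
    proof
      assume "h = 0 \<and> card J = 0"
      hence "Fv v h (a # nths aK J) = 0" using lJ Fv_0_small[of "a # nths aK J" v] by auto
      with L show False by simp
    qed
    have nexB: "\<not> (h = g \<and> card J = ?m)"
    proof
      assume "h = g \<and> card J = ?m"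
      hence "Fv v (g - h) ((k - 1 - a) # nths aK (-J)) = 0" using lcJ Fv_0_small[of "(k - 1 - a) # nths aK (-J)" v] by auto
      with R show False by simp
    qed
    have lowL: "2*h + length (a # nths aK J) < 2*g + Suc ?m"
      using nexB h cJ lJ by (cases "h = g") auto
    have lowR: "2*(g - h) + length ((k - 1 - a) # nths aK (-J)) < 2*g + Suc ?m"
      using nexA h cJ lcJ by (cases "h = 0") auto
    have dL: "a + sum_list (nths aK J) + 3 \<le> 3*h + Suc (card J)" using deg[OF lowL L] lJ by simp
    have dR: "(k - 1 - a) + sum_list (nths aK (-J)) + 3 \<le> 3*(g - h) + Suc (?m - card J)" using deg[OF lowR R] lcJ by simp
    have "sum_list (nths aK J) + sum_list (nths aK (-J)) = ?S" by (rule sum_nths_split)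
    with dL dR a h cJ big show False by auto
  qed
  have p3: "Fv v g ((k + aK ! i) # nths aK (-{i})) = 0" if i: "i < ?m" for i
  proof (rule ccontr)
    assume nz3: "Fv v g ((k + aK ! i) # nths aK (-{i})) \<noteq> 0"
    have l: "length (nths aK (-{i})) = ?m - 1" using length_nths_sub(2)[of "{i}" aK] i by simp
    have low: "2*g + length ((k + aK ! i) # nths aK (-{i})) < 2*g + Suc ?m" using l i by simp
    have d: "k + aK ! i + sum_list (nths aK (-{i})) + 3 \<le> 3*g + Suc (?m - 1)" using deg[OF low nz3] l by simp
    have "sum_list (nths aK {i}) + sum_list (nths aK (-{i})) = ?S" by (rule sum_nths_split)
    hence "aK ! i + sum_list (nths aK (-{i})) = ?S" using i by (simp add: nths_sing)
    with d i big show False by simp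
  qed
  have p4: "\<not> (g = 1 \<and> aK = [] \<and> k = 0)" using big by auto
  have s1: "(if g = 0 then 0 else (1/2) * (\<Sum>a<k. Fv v (g - 1) (a # (k - 1 - a) # aK))) = (0::'a)"
    using p1 by simp
  have s2: "(\<Sum>J\<in>Pow {..<?m}. \<Sum>h\<in>{..g}. \<Sum>a<k. Fv v h (a # nths aK J) * Fv v (g - h) ((k - 1 - a) # nths aK (-J))) = 0"
    by (intro sum.neutral ballI) (use p2 in blast)
  have s3: "(\<Sum>i<?m. of_nat (2 * aK ! i + 1) * Fv v g ((k + aK ! i) # nths aK (-{i}))) = (0::'a)"
    using p3 by simp
  have s4: "(if g = 1 \<and> aK = [] \<and> k = 0 then 1/8 else 0) = (0::'a)" using p4 by simp
  have "Phi (Fv v) g k aK = 0"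
    unfolding Phi_def s1 s2 s3 s4 by simp
  with nz show False by simp
qed

lemma omega_Nil: "ceo_omega y g n [] = 0"
proof (cases "2*g+n")
  case 0 then show ?thesis by (simp add: ceo_omega_def)
next
  case (Suc s) then show ?thesis by (simp add: ceo_omega_def ceo_step_def)
qed

lemma Fv_Nil: "Fv v g [] = 0" by (simp add: Fv_def omega_Nil)

lemma main_v:
  fixes v :: "nat \<Rightarrow> 'a::field_char_0"
  shows "stab g n \<Longrightarrow> Supp (ceo_omega (bgw_y v)) g n
     \<and> (\<forall>as. length as = n \<longrightarrow> Fv v g as \<noteq> 0 \<longrightarrow> sum_list as + 3 \<le> 3*g + n)
     \<and> (\<forall>k aK. Suc (length aK) = n \<longrightarrow> Fv v g (k # aK) = (\<Sum>d<3*g+n. sig v d * Phi (Fv v) g (k + d) aK))"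
proof (induction "2*g+n" arbitrary: g n rule: less_induct)
  case less
  let ?O = "ceo_omega (bgw_y v)"
  have st: "stab g n" by fact
  have n1: "n \<ge> 1" using st by (simp add: stab_def)
  have supp: "\<And>g' n'. stab g' n' \<Longrightarrow> 2*g'+n' < 2*g+n \<Longrightarrow> Supp ?O g' n'"
    using less.hyps by blast
  have deg: "sum_list as + 3 \<le> 3*g' + length as" if "2*g' + length as < 2*g + n" "Fv v g' as \<noteq> 0" for g' as
  proof (cases "stab g' (length as)")
    case True then show ?thesis using less.hyps[OF that(1) True] that(2) by blast
  next
    case False
    have "as \<noteq> []" using that(2) Fv_Nil by auto
    then show ?thesis using Fv_unstable[OF False] that(2) by blast
  qed
  have key: "?O g n (e1 # eK) = (if e1 \<in> range enc then (\<Sum>d<3*g+n. sig v d * PhiInt ?O g n eK (dec e1 + d)) else 0)"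
    if len: "length eK = n - 1" for e1 eK
  proof -
    have van: "PhiInt ?O g n eK k' = 0" if k': "3*g+n \<le> k'" for k'
    proof (cases "set eK \<subseteq> range enc")
      case True
      let ?aK = "map dec eK"
      have eK: "eK = map enc ?aK" using True by (simp add: map_idI enc_dec subset_iff)
      have nn: "n = Suc (length ?aK)" using len n1 by simp
      have "PhiInt ?O g n eK k' = Phi (Fv v) g k' ?aK"
        by (subst eK) (rule PhiInt_enc[OF st nn])
      moreover have "Phi (Fv v) g k' ?aK = 0"
      proof (rule ccontr)
        assume "Phi (Fv v) g k' ?aK \<noteq> 0"
        from Phi_deg[OF _ this] deg nn have "k' + sum_list ?aK + 3 \<le> 3*g + Suc (length ?aK)" by metis
        with k' nn show False by simp
      qed
      ultimately show ?thesis by simp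
    next
      case False then show ?thesis using PhiInt_nonenc[OF st len, of ?O] supp by blast
    qed
    show ?thesis
      using omega_rec[OF st, of "bgw_y v"] step_eval[OF st len supp van] by simp
  qed
  have P1: "Supp ?O g n"
    unfolding Supp_def
  proof (intro allI impI)
    fix e assume le: "length e = n" and nz: "?O g n e \<noteq> 0"
    obtain e1 eK where e: "e = e1 # eK" using le n1 by (cases e) auto
    have len: "length eK = n - 1" using le e by simp
    have e1: "e1 \<in> range enc" using nz key[OF len] e by (auto split: if_splits)
    have "set eK \<subseteq> range enc"
    proof (rule ccontr)
      assume "\<not> set eK \<subseteq> range enc"
      hence "PhiInt ?O g n eK k' = 0" for k' using PhiInt_nonenc[OF st len, of ?O] supp by blast
      hence "?O g n e = 0" using key[OF len] e by simp
      with nz show False by simp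
    qed
    then show "set e \<subseteq> range enc" using e e1 by simp
  qed
  have P3: "Fv v g (k # aK) = (\<Sum>d<3*g+n. sig v d * Phi (Fv v) g (k + d) aK)" if "Suc (length aK) = n" for k aK
  proof -
    have len: "length (map enc aK) = n - 1" using that by simp
    have "Fv v g (k # aK) = ?O g n (enc k # map enc aK)" using that by (simp add: Fv_def)
    also have "\<dots> = (\<Sum>d<3*g+n. sig v d * PhiInt ?O g n (map enc aK) (k + d))"
      using key[OF len] by simp
    also have "\<dots> = (\<Sum>d<3*g+n. sig v d * Phi (Fv v) g (k + d) aK)"
      by (rule sum.cong[OF refl], subst PhiInt_enc[OF st that[symmetric]]) (rule refl)
    finally show ?thesis .
  qed
  have P2: "sum_list as + 3 \<le> 3*g + n" if lenas: "length as = n" and nzas: "Fv v g as \<noteq> 0" for as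
  proof -
    obtain k aK where as: "as = k # aK" using lenas n1 by (cases as) auto
    have nn: "Suc (length aK) = n" using lenas as by simp
    have "(\<Sum>d<3*g+n. sig v d * Phi (Fv v) g (k + d) aK) \<noteq> 0" using nzas P3[OF nn] as by simp
    then obtain d where "Phi (Fv v) g (k + d) aK \<noteq> 0" by (metis (no_types, lifting) mult_zero_right sum.neutral)
    from Phi_deg[OF _ this] deg nn have "k + d + sum_list aK + 3 \<le> 3*g + Suc (length aK)" by metis
    then show ?thesis using as nn by simp
  qed
  show ?case using P1 P2 P3 by blast
qed


lemma Phi_g0_short:
  assumes z: "\<And>bs. bs \<noteq> [] \<Longrightarrow> length bs \<le> length aK \<Longrightarrow> Fn 0 bs = 0" and m1: "length aK \<ge> 1"
  shows "Phi Fn 0 k aK = 0"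
proof -
  let ?m = "length aK"
  have p2: "Fn h (a # nths aK J) * Fn (0 - h) ((k - 1 - a) # nths aK (-J)) = 0"
    if J: "J \<in> Pow {..<?m}" and h: "h \<in> {..0::nat}" for J h a
  proof -
    have h0: "h = 0" using h by simp
    have Jsub: "J \<subseteq> {..<length aK}" using J by auto
    have lJ: "length (nths aK J) = card J" and lcJ: "length (nths aK (-J)) = ?m - card J"
      using length_nths_sub[OF Jsub] by auto
    have cJ: "card J \<le> ?m" using Jsub by (metis card_lessThan card_mono finite_lessThan)
    show ?thesis
    proof (cases "card J < ?m")
      case True
      then show ?thesis using z[of "a # nths aK J"] lJ h0 by simp
    next
      case False
      then show ?thesis using z[of "(k - 1 - a) # nths aK (-J)"] lcJ h0 cJ m1 by simp
    qed
  qed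
  have p3: "Fn 0 ((k + aK ! i) # nths aK (-{i})) = 0" if "i < ?m" for i
  proof -
    have "length (nths aK (-{i})) = ?m - 1" using length_nths_sub(2)[of "{i}" aK] that by simp
    then show ?thesis using z[of "(k + aK ! i) # nths aK (-{i})"] m1 by simp
  qed
  have s2: "(\<Sum>J\<in>Pow {..<?m}. \<Sum>h\<in>{..0::nat}. \<Sum>a<k. Fn h (a # nths aK J) * Fn (0 - h) ((k - 1 - a) # nths aK (-J))) = 0"
    by (intro sum.neutral ballI) (use p2 in blast)
  have s3: "(\<Sum>i<?m. of_nat (2 * aK ! i + 1) * Fn 0 ((k + aK ! i) # nths aK (-{i}))) = 0"
    using p3 by simp
  show ?thesis unfolding Phi_def s2 s3 by simp
qed

lemma Phi_g0: "(\<And>bs. Fn 0 bs = 0) \<Longrightarrow> Phi Fn 0 k aK = 0"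
  unfolding Phi_def by simp

lemma Fv_genus0:
  fixes v :: "nat \<Rightarrow> 'a::field_char_0"
  shows "Fv v 0 as = 0"
proof (induction "length as" arbitrary: as rule: less_induct)
  case less
  show ?case
  proof (cases "stab 0 (length as)")
    case False
    then show ?thesis using Fv_unstable Fv_Nil by (cases "as = []") auto
  next
    case True
    then obtain k aK where as: "as = k # aK" by (cases as) (auto simp: stab_def)
    have m1: "length aK \<ge> 1" using True as by (simp add: stab_def)
    have "Phi (Fv v) 0 k' aK = 0" for k'
      by (rule Phi_g0_short[OF _ m1]) (use less as in auto)
    moreover have "Fv v 0 (k # aK) = (\<Sum>d<3*0+length as. sig v d * Phi (Fv v) 0 (k + d) aK)"
      using main_v[OF True] as by auto
    ultimately show ?thesis using as by simp
  qed
qed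

lemma sig0: "sig (\<lambda>_. 0::'a::field) d = (if d = 0 then 1 else 0)"
proof -
  have "Cv (\<lambda>_. 0::'a) = 1" by (simp add: Cv_def fps_eq_iff)
  then show ?thesis by (simp add: sig_def Sinv_def)
qed

abbreviation FB :: "nat \<Rightarrow> nat list \<Rightarrow> 'a::field_char_0" where "FB \<equiv> Fv (\<lambda>_. 0)"

lemma FB_rec: "FB g (k # L) = Phi FB g k L"
proof (cases "stab g (Suc (length L))")
  case True
  have "FB g (k # L) = (\<Sum>d<3*g+Suc (length L). sig (\<lambda>_. 0) d * Phi FB g (k + d) L)"
    using main_v[OF True] by auto
  also have "\<dots> = (\<Sum>d<3*g+Suc (length L). if d = 0 then Phi FB g k L else 0)"
    by (rule sum.cong) (auto simp: sig0)
  also have "\<dots> = Phi FB g k L" by simp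
  finally show ?thesis .
next
  case False
  hence g0: "g = 0" by (auto simp: stab_def)
  show ?thesis using g0 Fv_genus0 Phi_g0[of FB] by metis
qed

lemma Phi_hom:
  assumes z0: "\<And>bs. Fn 0 bs = 0"
    and hom: "\<And>g' bs. 2*g' + length bs < 2*g + Suc (length aK) \<Longrightarrow> Fn g' bs \<noteq> 0 \<Longrightarrow> sum_list bs + 1 = g'"
    and nz: "Phi Fn g k aK \<noteq> 0"
  shows "k + sum_list aK + 1 = g"
proof (rule ccontr)
  assume neq: "k + sum_list aK + 1 \<noteq> g"
  let ?m = "length aK" and ?S = "sum_list aK"
  have p1: "Fn (g - 1) (a # (k - 1 - a) # aK) = 0" if "g \<noteq> 0" "a < k" for a
  proof (rule ccontr)
    assume nz1: "Fn (g - 1) (a # (k - 1 - a) # aK) \<noteq> 0"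
    have low: "2*(g-1) + length (a # (k - 1 - a) # aK) < 2*g + Suc ?m" using that by simp
    from hom[OF low nz1] have "a + (k - 1 - a) + ?S + 1 = g - 1" by simp
    with that neq show False by arith
  qed
  have p2: "Fn h (a # nths aK J) * Fn (g - h) ((k - 1 - a) # nths aK (-J)) = 0"
    if J: "J \<in> Pow {..<?m}" and h: "h \<in> {..g}" and a: "a < k" for J h a
  proof (rule ccontr)
    assume "\<not> ?thesis"
    hence L: "Fn h (a # nths aK J) \<noteq> 0" and R: "Fn (g - h) ((k - 1 - a) # nths aK (-J)) \<noteq> 0" by auto
    have h0: "h \<noteq> 0" using L z0 by metis
    have hg: "h \<noteq> g" using R z0 by (metis diff_self_eq_0)
    have Jsub: "J \<subseteq> {..<length aK}" using J by auto
    have lJ: "length (nths aK J) = card J" and lcJ: "length (nths aK (-J)) = ?m - card J"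
      using length_nths_sub[OF Jsub] by auto
    have cJ: "card J \<le> ?m" using Jsub by (metis card_lessThan card_mono finite_lessThan)
    have lowL: "2*h + length (a # nths aK J) < 2*g + Suc ?m" using h hg cJ lJ by auto
    have lowR: "2*(g - h) + length ((k - 1 - a) # nths aK (-J)) < 2*g + Suc ?m" using h h0 cJ lcJ by auto
    have dL: "a + sum_list (nths aK J) + 1 = h" using hom[OF lowL L] by simp
    have dR: "(k - 1 - a) + sum_list (nths aK (-J)) + 1 = g - h" using hom[OF lowR R] by simp
    have "sum_list (nths aK J) + sum_list (nths aK (-J)) = ?S" by (rule sum_nths_split)
    with dL dR a h neq show False by auto
  qed
  have p3: "Fn g ((k + aK ! i) # nths aK (-{i})) = 0" if i: "i < ?m" for i
  proof (rule ccontr)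
    assume nz3: "Fn g ((k + aK ! i) # nths aK (-{i})) \<noteq> 0"
    have l: "length (nths aK (-{i})) = ?m - 1" using length_nths_sub(2)[of "{i}" aK] i by simp
    have low: "2*g + length ((k + aK ! i) # nths aK (-{i})) < 2*g + Suc ?m" using l i by simp
    have d: "k + aK ! i + sum_list (nths aK (-{i})) + 1 = g" using hom[OF low nz3] by simp
    have "sum_list (nths aK {i}) + sum_list (nths aK (-{i})) = ?S" by (rule sum_nths_split)
    hence "aK ! i + sum_list (nths aK (-{i})) = ?S" using i by (simp add: nths_sing)
    with d neq show False by simp
  qed
  have p4: "\<not> (g = 1 \<and> aK = [] \<and> k = 0)" using neq by auto
  have s1: "(if g = 0 then 0 else (1/2) * (\<Sum>a<k. Fn (g - 1) (a # (k - 1 - a) # aK))) = 0"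
    using p1 by simp
  have s2: "(\<Sum>J\<in>Pow {..<?m}. \<Sum>h\<in>{..g}. \<Sum>a<k. Fn h (a # nths aK J) * Fn (g - h) ((k - 1 - a) # nths aK (-J))) = 0"
    by (intro sum.neutral ballI) (use p2 in blast)
  have s3: "(\<Sum>i<?m. of_nat (2 * aK ! i + 1) * Fn g ((k + aK ! i) # nths aK (-{i}))) = 0"
    using p3 by simp
  have s4: "(if g = 1 \<and> aK = [] \<and> k = 0 then 1/8 else 0) = 0" using p4 by auto
  have "Phi Fn g k aK = 0"
    unfolding Phi_def s1 s2 s3 s4 by simp
  with nz show False by simp
qed

lemma FB_deg: "FB g as \<noteq> (0::'a::field_char_0) \<Longrightarrow> sum_list as + 1 = g"
proof (induction "2*g + length as" arbitrary: g as rule: less_induct)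
  case less
  obtain k aK where as: "as = k # aK" using less.prems Fv_Nil by (cases as) auto
  have "FB g as = (Phi FB g k aK :: 'a)" using as FB_rec by simp
  hence "Phi FB g k aK \<noteq> (0::'a)" using less.prems by simp
  from Phi_hom[OF _ _ this] less.hyps Fv_genus0 as
  have "k + sum_list aK + 1 = g" by (metis length_Cons)
  then show ?case using as by simp
qed


fun Lsum :: "(nat \<Rightarrow> 'a::comm_ring_1) \<Rightarrow> nat set \<Rightarrow> nat \<Rightarrow> (nat list \<Rightarrow> 'a) \<Rightarrow> 'a" where
  "Lsum u B 0 X = X []"
| "Lsum u B (Suc m) X = (\<Sum>b\<in>B. u b * Lsum u B m (\<lambda>bs. X (b # bs)))"

lemma Lsum_add: "Lsum u B m (\<lambda>bs. X bs + Y bs) = Lsum u B m X + Lsum u B m Y"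
  by (induction m arbitrary: X Y) (simp_all add: distrib_left sum.distrib)

lemma Lsum_cmult: "Lsum u B m (\<lambda>bs. c * X bs) = c * Lsum u B m X"
  by (induction m arbitrary: X) (simp_all add: sum_distrib_left algebra_simps)

lemma Lsum_cong: "(\<And>bs. length bs = m \<Longrightarrow> set bs \<subseteq> B \<Longrightarrow> X bs = Y bs) \<Longrightarrow> Lsum u B m X = Lsum u B m Y"
proof (induction m arbitrary: X Y)
  case 0 then show ?case by simp
next
  case (Suc m)
  show ?case
    by (simp, rule sum.cong[OF refl], rule arg_cong2[where f = "(*)"], rule refl, rule Suc.IH) (use Suc.prems in auto)
qed

lemma Lsum_zero: "(\<And>bs. length bs = m \<Longrightarrow> set bs \<subseteq> B \<Longrightarrow> X bs = 0) \<Longrightarrow> Lsum u B m X = 0"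
proof -
  assume "\<And>bs. length bs = m \<Longrightarrow> set bs \<subseteq> B \<Longrightarrow> X bs = 0"
  hence "Lsum u B m X = Lsum u B m (\<lambda>_. 0)" by (intro Lsum_cong) auto
  also have "\<dots> = 0" by (induction m) simp_all
  finally show ?thesis .
qed

lemma Lsum_nz: "Lsum u B m X \<noteq> 0 \<Longrightarrow> \<exists>bs. length bs = m \<and> set bs \<subseteq> B \<and> X bs \<noteq> 0"
  using Lsum_zero by blast

lemma Lsum_sum: "finite I \<Longrightarrow> Lsum u B m (\<lambda>bs. \<Sum>i\<in>I. X i bs) = (\<Sum>i\<in>I. Lsum u B m (X i))"
proof (induction m arbitrary: X)
  case 0 then show ?case by simp
next
  case (Suc m)
  have "Lsum u B (Suc m) (\<lambda>bs. \<Sum>i\<in>I. X i bs) = (\<Sum>b\<in>B. u b * (\<Sum>i\<in>I. Lsum u B m (\<lambda>bs. X i (b # bs))))"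
    using Suc by simp
  also have "\<dots> = (\<Sum>i\<in>I. Lsum u B (Suc m) (X i))"
    by (simp add: sum_distrib_left sum.swap[of _ B I])
  finally show ?case .
qed

lemma sum_Pow_Suc:
  "(\<Sum>J\<in>Pow {..<Suc m}. F J) = (\<Sum>J\<in>Pow {..<m}. F (Suc ` J)) + (\<Sum>J\<in>Pow {..<m}. F (insert 0 (Suc ` J)))"
proof -
  have U: "Pow {..<Suc m} = (image Suc) ` Pow {..<m} \<union> (\<lambda>J. insert 0 (Suc ` J)) ` Pow {..<m}"
  proof (intro equalityI subsetI)
    fix J assume J: "J \<in> Pow {..<Suc m}"
    let ?J' = "{j. Suc j \<in> J}"
    have J'm: "?J' \<in> Pow {..<m}" using J by auto
    show "J \<in> (image Suc) ` Pow {..<m} \<union> (\<lambda>J. insert 0 (Suc ` J)) ` Pow {..<m}"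
    proof (cases "0 \<in> J")
      case True
      have "J = insert 0 (Suc ` ?J')" using True by (auto simp: image_iff) (metis not0_implies_Suc)
      then show ?thesis using J'm by blast
    next
      case False
      have "J = Suc ` ?J'" using False by (auto simp: image_iff) (metis not0_implies_Suc)
      then show ?thesis using J'm by blast
    qed
  qed auto
  have D: "(image Suc) ` Pow {..<m} \<inter> (\<lambda>J. insert 0 (Suc ` J)) ` Pow {..<m} = {}" by auto
  have I1: "inj_on (image Suc) (Pow {..<m})" by (rule inj_onI) (simp add: inj_image_eq_iff)
  have I2: "inj_on (\<lambda>J. insert 0 (Suc ` J)) (Pow {..<m})"
  proof (rule inj_onI)
    fix A B assume "insert 0 (Suc ` A) = insert 0 (Suc ` (B::nat set))"
    hence "Suc ` A = Suc ` B" by (metis Diff_insert_absorb image_iff nat.distinct(1))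
    then show "A = B" by (simp add: inj_image_eq_iff)
  qed
  show ?thesis
    unfolding U by (subst sum.union_disjoint) (auto simp: D sum.reindex[OF I1] sum.reindex[OF I2])
qed

lemma nths_Suc_img: "nths (b # bs) (Suc ` J) = nths bs J" "nths (b # bs) (- (Suc ` J)) = b # nths bs (-J)"
  "nths (b # bs) (insert 0 (Suc ` J)) = b # nths bs J" "nths (b # bs) (- insert 0 (Suc ` J)) = nths bs (-J)"
proof -
  have 1: "{j. Suc j \<in> Suc ` J} = J" by auto
  have 2: "{j. Suc j \<in> - (Suc ` J)} = -J" by auto
  have 3: "{j. Suc j \<in> insert 0 (Suc ` J)} = J" by auto
  have 4: "{j. Suc j \<in> - insert 0 (Suc ` J)} = -J" by auto
  show "nths (b # bs) (Suc ` J) = nths bs J" by (simp only: nths_Cons 1) simp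
  show "nths (b # bs) (- (Suc ` J)) = b # nths bs (-J)" by (simp only: nths_Cons 2) simp
  show "nths (b # bs) (insert 0 (Suc ` J)) = b # nths bs J" by (simp only: nths_Cons 3) simp
  show "nths (b # bs) (- insert 0 (Suc ` J)) = nths bs (-J)" by (simp only: nths_Cons 4) simp
qed

lemma pascal_sum:
  fixes A C :: "nat \<Rightarrow> 'a::comm_ring_1"
  shows "(\<Sum>p\<le>m. of_nat (m choose p) * (A p * C (Suc m - p) + A (Suc p) * C (m - p)))
       = (\<Sum>p\<le>Suc m. of_nat (Suc m choose p) * (A p * C (Suc m - p)))"
proof -
  have e1: "(\<Sum>p\<le>m. of_nat (m choose p) * (A p * C (Suc m - p)))
          = (\<Sum>p\<le>Suc m. of_nat (m choose p) * (A p * C (Suc m - p)))" by (simp add: binomial_eq_0)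
  also have "\<dots> = A 0 * C (Suc m) + (\<Sum>p\<le>m. of_nat (m choose Suc p) * (A (Suc p) * C (m - p)))"
    by (subst sum.atMost_Suc_shift) simp
  finally have e1': "(\<Sum>p\<le>m. of_nat (m choose p) * (A p * C (Suc m - p)))
      = A 0 * C (Suc m) + (\<Sum>p\<le>m. of_nat (m choose Suc p) * (A (Suc p) * C (m - p)))" .
  have "(\<Sum>p\<le>Suc m. of_nat (Suc m choose p) * (A p * C (Suc m - p)))
      = A 0 * C (Suc m) + (\<Sum>p\<le>m. of_nat (Suc m choose Suc p) * (A (Suc p) * C (m - p)))"
    by (subst sum.atMost_Suc_shift) simp
  also have "\<dots> = A 0 * C (Suc m) + (\<Sum>p\<le>m. of_nat (m choose Suc p) * (A (Suc p) * C (m - p)))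
                 + (\<Sum>p\<le>m. of_nat (m choose p) * (A (Suc p) * C (m - p)))"
    by (simp add: sum.distrib algebra_simps)
  finally show ?thesis using e1' by (simp add: sum.distrib algebra_simps)
qed

lemma Lsum_split:
  "Lsum u B m (\<lambda>bs. \<Sum>J\<in>Pow {..<m}. X (nths bs J) * Y (nths bs (-J)))
   = (\<Sum>p\<le>m. of_nat (m choose p) * (Lsum u B p X * Lsum u B (m - p) Y))"
proof (induction m arbitrary: X Y)
  case 0 then show ?case by simp
next
  case (Suc m)
  have inner: "(\<Sum>J\<in>Pow {..<Suc m}. X (nths (b # bs) J) * Y (nths (b # bs) (-J)))
      = (\<Sum>J\<in>Pow {..<m}. X (nths bs J) * Y (b # nths bs (-J))) + (\<Sum>J\<in>Pow {..<m}. X (b # nths bs J) * Y (nths bs (-J)))" for b bs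
    by (simp only: sum_Pow_Suc nths_Suc_img)
  have "Lsum u B (Suc m) (\<lambda>bs. \<Sum>J\<in>Pow {..<Suc m}. X (nths bs J) * Y (nths bs (-J)))
      = (\<Sum>b\<in>B. u b * (Lsum u B m (\<lambda>bs. \<Sum>J\<in>Pow {..<m}. X (nths bs J) * Y (b # nths bs (-J)))
                        + Lsum u B m (\<lambda>bs. \<Sum>J\<in>Pow {..<m}. X (b # nths bs J) * Y (nths bs (-J)))))"
    by (simp add: inner Lsum_add)
  also have "\<dots> = (\<Sum>b\<in>B. u b * ((\<Sum>p\<le>m. of_nat (m choose p) * (Lsum u B p X * Lsum u B (m - p) (\<lambda>l. Y (b # l))))
                        + (\<Sum>p\<le>m. of_nat (m choose p) * (Lsum u B p (\<lambda>l. X (b # l)) * Lsum u B (m - p) Y))))"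
    by (simp only: Suc.IH[of X "\<lambda>l. Y (b # l)" for b] Suc.IH[of "\<lambda>l. X (b # l)" Y for b])
  also have "\<dots> = (\<Sum>p\<le>m. of_nat (m choose p) * (Lsum u B p X * Lsum u B (Suc (m - p)) Y + Lsum u B (Suc p) X * Lsum u B (m - p) Y))"
    by (simp add: sum_distrib_left sum.distrib sum.swap[of _ B "{..m}"] algebra_simps)
  also have "\<dots> = (\<Sum>p\<le>m. of_nat (m choose p) * (Lsum u B p X * Lsum u B (Suc m - p) Y + Lsum u B (Suc p) X * Lsum u B (m - p) Y))"
    by (rule sum.cong[OF refl]) (simp add: Suc_diff_le)
  also have "\<dots> = (\<Sum>p\<le>Suc m. of_nat (Suc m choose p) * (Lsum u B p X * Lsum u B (Suc m - p) Y))"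
    by (rule pascal_sum[where A = "\<lambda>p. Lsum u B p X" and C = "\<lambda>q. Lsum u B q Y"])
  finally show ?case .
qed

lemma nths_Cons_del0: "nths (b # bs) (-{0}) = bs"
proof -
  have "{j. Suc j \<in> - {0}} = UNIV" by auto
  then show ?thesis by (simp add: nths_Cons nths_all)
qed

lemma nths_Cons_delSuc: "nths (b # bs) (-{Suc l}) = b # nths bs (-{l})"
proof -
  have "{j. Suc j \<in> - {Suc l}} = -{l}" by auto
  then show ?thesis by (simp add: nths_Cons)
qed

lemma Lsum_ins:
  "Lsum u B (Suc m) (\<lambda>bs. \<Sum>l<Suc m. c (bs ! l) * Z (bs ! l) (nths bs (-{l})))
   = of_nat (Suc m) * (\<Sum>b\<in>B. c b * u b * Lsum u B m (Z b))"
proof (induction m arbitrary: Z)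
  case 0
  show ?case by (simp add: nths_Cons_del0 algebra_simps)
next
  case (Suc m)
  have inner: "(\<Sum>l<Suc (Suc m). c ((b0 # bs) ! l) * Z ((b0 # bs) ! l) (nths (b0 # bs) (-{l})))
      = c b0 * Z b0 bs + (\<Sum>l<Suc m. c (bs ! l) * Z (bs ! l) (b0 # nths bs (-{l})))" for b0 bs
    by (subst sum.lessThan_Suc_shift) (simp add: nths_Cons_del0 nths_Cons_delSuc)
  have "Lsum u B (Suc (Suc m)) (\<lambda>bs. \<Sum>l<Suc (Suc m). c (bs ! l) * Z (bs ! l) (nths bs (-{l})))
      = (\<Sum>b0\<in>B. u b0 * (c b0 * Lsum u B (Suc m) (Z b0)
          + Lsum u B (Suc m) (\<lambda>bs. \<Sum>l<Suc m. c (bs ! l) * (\<lambda>b bs'. Z b (b0 # bs')) (bs ! l) (nths bs (-{l})))))"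
    by (simp only: Lsum.simps(2)[of u B "Suc m"] inner Lsum_add Lsum_cmult)
  also have "\<dots> = (\<Sum>b0\<in>B. u b0 * (c b0 * Lsum u B (Suc m) (Z b0)
          + of_nat (Suc m) * (\<Sum>b\<in>B. c b * u b * Lsum u B m (\<lambda>bs'. Z b (b0 # bs')))))"
  proof (rule sum.cong[OF refl])
    fix b0
    have "Lsum u B (Suc m) (\<lambda>bs. \<Sum>l<Suc m. c (bs ! l) * Z (bs ! l) (b0 # nths bs (-{l})))
        = of_nat (Suc m) * (\<Sum>b\<in>B. c b * u b * Lsum u B m (\<lambda>bs'. Z b (b0 # bs')))"
      using Suc.IH[of "\<lambda>b bs'. Z b (b0 # bs')"] by simp
    then show "u b0 * (c b0 * Lsum u B (Suc m) (Z b0)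
          + Lsum u B (Suc m) (\<lambda>bs. \<Sum>l<Suc m. c (bs ! l) * (\<lambda>b bs'. Z b (b0 # bs')) (bs ! l) (nths bs (-{l}))))
        = u b0 * (c b0 * Lsum u B (Suc m) (Z b0)
          + of_nat (Suc m) * (\<Sum>b\<in>B. c b * u b * Lsum u B m (\<lambda>bs'. Z b (b0 # bs'))))" by simp
  qed
  also have "\<dots> = (\<Sum>b0\<in>B. u b0 * c b0 * Lsum u B (Suc m) (Z b0))
          + of_nat (Suc m) * (\<Sum>b\<in>B. c b * u b * (\<Sum>b0\<in>B. u b0 * Lsum u B m (\<lambda>bs'. Z b (b0 # bs'))))"
  proof -
    let ?M = "\<lambda>b b0. Lsum u B m (\<lambda>bs'. Z b (b0 # bs'))"
    have "(\<Sum>b0\<in>B. u b0 * (c b0 * Lsum u B (Suc m) (Z b0) + of_nat (Suc m) * (\<Sum>b\<in>B. c b * u b * ?M b b0)))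
        = (\<Sum>b0\<in>B. u b0 * c b0 * Lsum u B (Suc m) (Z b0)) + (\<Sum>b0\<in>B. of_nat (Suc m) * (\<Sum>b\<in>B. u b0 * (c b * u b * ?M b b0)))"
      by (simp add: distrib_left sum.distrib sum_distrib_left mult.assoc mult.left_commute)
    also have "(\<Sum>b0\<in>B. of_nat (Suc m) * (\<Sum>b\<in>B. u b0 * (c b * u b * ?M b b0)))
        = of_nat (Suc m) * (\<Sum>b0\<in>B. \<Sum>b\<in>B. u b0 * (c b * u b * ?M b b0))"
      by (simp add: sum_distrib_left)
    also have "(\<Sum>b0\<in>B. \<Sum>b\<in>B. u b0 * (c b * u b * ?M b b0)) = (\<Sum>b\<in>B. \<Sum>b0\<in>B. u b0 * (c b * u b * ?M b b0))"
      by (rule sum.swap)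
    also have "\<dots> = (\<Sum>b\<in>B. c b * u b * (\<Sum>b0\<in>B. u b0 * ?M b b0))"
      by (simp add: sum_distrib_left mult.assoc mult.left_commute)
    finally show ?thesis .
  qed
  also have "\<dots> = (\<Sum>b\<in>B. c b * u b * Lsum u B (Suc m) (Z b)) + of_nat (Suc m) * (\<Sum>b\<in>B. c b * u b * Lsum u B (Suc m) (Z b))"
    by (simp add: mult.assoc mult.left_commute)
  also have "\<dots> = of_nat (Suc (Suc m)) * (\<Sum>b\<in>B. c b * u b * Lsum u B (Suc m) (Z b))"
    by (simp add: distrib_right)
  finally show ?case .
qed


lemma sum_lessThan_add: "(\<Sum>i<a+b::nat. f i) = (\<Sum>i<a. f i) + (\<Sum>l<b. f (a + l))"
  by (induction b) (simp_all add: add.assoc)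

lemma nths_app_del_left:
  assumes "i < length xs" shows "nths (xs @ ys) (-{i}) = nths xs (-{i}) @ ys"
proof -
  have "{j. j + length xs \<in> - {i}} = UNIV" using assms by auto
  then show ?thesis by (simp add: nths_append nths_all)
qed

lemma nths_app_del_right: "nths (xs @ ys) (-{length xs + l}) = xs @ nths ys (-{l})"
proof -
  have 1: "nths xs (-{length xs + l}) = xs" by (rule nths_all) auto
  have 2: "{j. j + length xs \<in> - {length xs + l}} = -{l}" by auto
  show ?thesis by (simp only: nths_append 1 2)
qed

lemma nths_app_split:
  assumes J1: "J1 \<subseteq> {..<length xs}"
  shows "nths (xs @ ys) (J1 \<union> (+) (length xs) ` J2) = nths xs J1 @ nths ys J2"
    and "nths (xs @ ys) (- (J1 \<union> (+) (length xs) ` J2)) = nths xs (-J1) @ nths ys (-J2)"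
proof -
  have a: "nths xs (J1 \<union> (+) (length xs) ` J2) = nths xs J1" by (rule nths_cong_len) auto
  have b: "{j. j + length xs \<in> J1 \<union> (+) (length xs) ` J2} = J2" using J1 by (auto simp: image_iff add.commute)
  show "nths (xs @ ys) (J1 \<union> (+) (length xs) ` J2) = nths xs J1 @ nths ys J2"
    by (simp only: nths_append a b)
  have c: "nths xs (- (J1 \<union> (+) (length xs) ` J2)) = nths xs (-J1)" by (rule nths_cong_len) auto
  have d: "{j. j + length xs \<in> - (J1 \<union> (+) (length xs) ` J2)} = -J2" using J1 by (auto simp: image_iff add.commute)
  show "nths (xs @ ys) (- (J1 \<union> (+) (length xs) ` J2)) = nths xs (-J1) @ nths ys (-J2)"
    by (simp only: nths_append c d)
qed

lemma sum_Pow_add: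
  "(\<Sum>J\<in>Pow {..<a+b::nat}. F J) = (\<Sum>J1\<in>Pow {..<a}. \<Sum>J2\<in>Pow {..<b}. F (J1 \<union> (+) a ` J2))"
proof -
  let ?f = "\<lambda>(J1, J2). J1 \<union> (+) a ` J2"
  have bij: "bij_betw ?f (Pow {..<a} \<times> Pow {..<b}) (Pow {..<a+b})"
  proof (rule bij_betw_byWitness[where f' = "\<lambda>J. (J \<inter> {..<a}, {j. a + j \<in> J})"])
    show "\<forall>x\<in>Pow {..<a} \<times> Pow {..<b}. (\<lambda>J. (J \<inter> {..<a}, {j. a + j \<in> J})) (?f x) = x"
      by (auto simp: image_iff)
    show "\<forall>y\<in>Pow {..<a+b}. ?f ((\<lambda>J. (J \<inter> {..<a}, {j. a + j \<in> J})) y) = y"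
    proof
      fix J assume J: "J \<in> Pow {..<a+b}"
      show "?f ((\<lambda>J. (J \<inter> {..<a}, {j. a + j \<in> J})) J) = J"
      proof (intro equalityI subsetI)
        fix x assume x: "x \<in> J"
        show "x \<in> ?f ((\<lambda>J. (J \<inter> {..<a}, {j. a + j \<in> J})) J)"
        proof (cases "x < a")
          case False
          hence "x = a + (x - a)" by simp
          then show ?thesis using x by (metis (mono_tags, lifting) UnI2 case_prod_conv imageI mem_Collect_eq)
        qed (use x in auto)
      qed auto
    qed
    show "?f ` (Pow {..<a} \<times> Pow {..<b}) \<subseteq> Pow {..<a+b}" by auto
    show "(\<lambda>J. (J \<inter> {..<a}, {j. a + j \<in> J})) ` Pow {..<a+b} \<subseteq> Pow {..<a} \<times> Pow {..<b}" by auto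
  qed
  have "(\<Sum>J\<in>Pow {..<a+b}. F J) = (\<Sum>x\<in>Pow {..<a} \<times> Pow {..<b}. F (?f x))"
    using sum.reindex_bij_betw[OF bij, of F] by simp
  also have "\<dots> = (\<Sum>J1\<in>Pow {..<a}. \<Sum>J2\<in>Pow {..<b}. F (J1 \<union> (+) a ` J2))"
    by (simp add: sum.cartesian_product split_def)
  finally show ?thesis .
qed

lemma length_le_sum: "\<forall>b\<in>set bs. 1 \<le> b \<Longrightarrow> length bs \<le> sum_list (bs :: nat list)"
  by (induction bs) auto

definition uu :: "(nat \<Rightarrow> 'a::field_char_0) \<Rightarrow> nat \<Rightarrow> 'a" where
  "uu v b = v (2 * b - 1) / of_nat (2 * b + 1)"

definition cm :: "nat \<Rightarrow> 'a::field_char_0" where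
  "cm m = (-1) ^ m / fact m"

definition T :: "(nat \<Rightarrow> 'a::field_char_0) \<Rightarrow> nat \<Rightarrow> nat \<Rightarrow> nat list \<Rightarrow> 'a" where
  "T v N g as = (\<Sum>m\<le>N. cm m * Lsum (uu v) {1..N} m (\<lambda>bs. FB g (as @ bs)))"

lemma cm_Suc: "cm (Suc m) * of_nat (Suc m) = - (cm m :: 'a::field_char_0)"
proof -
  have a: "(fact m :: 'a) \<noteq> 0" by simp
  have b: "(of_nat (Suc m) :: 'a) \<noteq> 0" by (simp del: of_nat_Suc)
  have "cm (Suc m) * of_nat (Suc m) = ((-1) ^ Suc m / (of_nat (Suc m) * fact m)) * (of_nat (Suc m) :: 'a)"
    unfolding cm_def by (simp only: fact_Suc of_nat_mult of_nat_fact)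
  also have "\<dots> = (-1) ^ Suc m / fact m" using a b by (simp del: of_nat_Suc add: field_simps)
  also have "\<dots> = - cm m" by (simp add: cm_def)
  finally show ?thesis .
qed

lemma cm_choose: "p \<le> m \<Longrightarrow> cm m * of_nat (m choose p) = cm p * (cm (m - p) :: 'a::field_char_0)"
proof -
  assume pm: "p \<le> m"
  have "(fact m :: 'a) = of_nat (fact m)" by simp
  also have "\<dots> = of_nat (fact p * fact (m - p) * (m choose p))" by (simp only: binomial_fact_lemma[OF pm])
  also have "\<dots> = (of_nat (m choose p) * fact p * fact (m - p) :: 'a)" by (simp only: of_nat_mult of_nat_fact mult_ac)
  finally have f: "(fact m :: 'a) = of_nat (m choose p) * fact p * fact (m - p)" .
  have s: "(-1::'a) ^ m = (-1) ^ p * (-1) ^ (m - p)" using pm by (simp add: power_add[symmetric])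
  show ?thesis unfolding cm_def s f using pm by (simp add: field_simps)
qed

lemma uu_mult: "of_nat (2 * b + 1) * uu v b = v (2 * b - 1)"
  unfolding uu_def by (simp add: field_simps del: of_nat_Suc)

lemma Lsum_FB_zero:
  assumes "g < m + sum_list pre + 1"
  shows "Lsum (uu v) {1..N} m (\<lambda>bs. FB g (pre @ bs)) = (0::'a::field_char_0)"
proof (rule Lsum_zero)
  fix bs :: "nat list" assume l: "length bs = m" and s: "set bs \<subseteq> {1..N}"
  have "length bs \<le> sum_list bs" using s by (intro length_le_sum) auto
  show "FB g (pre @ bs) = (0::'a)"
  proof (rule ccontr)
    assume "FB g (pre @ bs) \<noteq> (0::'a)"
    from FB_deg[OF this] have "sum_list pre + sum_list bs + 1 = g" by simp
    with assms l \<open>length bs \<le> sum_list bs\<close> show False by simp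
  qed
qed

lemma T_genus0: "T v N 0 as = 0"
  unfolding T_def by (simp add: Fv_genus0 Lsum_zero)

lemma T_vanish:
  assumes "T v N g as \<noteq> (0::'a::field_char_0)" shows "sum_list as + 1 \<le> g"
proof (rule ccontr)
  assume "\<not> ?thesis"
  hence "Lsum (uu v) {1..N} m (\<lambda>bs. FB g (as @ bs)) = (0::'a)" for m
    by (intro Lsum_FB_zero) simp
  hence "T v N g as = 0" unfolding T_def by simp
  with assms show False by simp
qed


lemma T_prod:
  fixes X Y :: "nat list \<Rightarrow> 'a::field_char_0"
  assumes vX: "\<And>p. Lsum U Bs p X \<noteq> 0 \<Longrightarrow> p < h1"
    and vY: "\<And>q. Lsum U Bs q Y \<noteq> 0 \<Longrightarrow> q < h2"
    and hN: "h1 + h2 \<le> N + 1"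
  shows "(\<Sum>m\<le>N. cm m * Lsum U Bs m (\<lambda>bs. \<Sum>J\<in>Pow {..<m}. X (nths bs J) * Y (nths bs (-J))))
       = (\<Sum>p\<le>N. cm p * Lsum U Bs p X) * (\<Sum>q\<le>N. cm q * Lsum U Bs q Y)"
proof -
  let ?f = "\<lambda>p q. cm p * Lsum U Bs p X * (cm q * Lsum U Bs q Y)"
  have "(\<Sum>m\<le>N. cm m * Lsum U Bs m (\<lambda>bs. \<Sum>J\<in>Pow {..<m}. X (nths bs J) * Y (nths bs (-J))))
      = (\<Sum>m\<le>N. \<Sum>p\<le>m. ?f p (m - p))"
  proof (rule sum.cong[OF refl])
    fix m
    have "cm m * Lsum U Bs m (\<lambda>bs. \<Sum>J\<in>Pow {..<m}. X (nths bs J) * Y (nths bs (-J)))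
        = (\<Sum>p\<le>m. (cm m * of_nat (m choose p)) * (Lsum U Bs p X * Lsum U Bs (m - p) Y))"
      by (simp add: Lsum_split sum_distrib_left mult.assoc)
    also have "\<dots> = (\<Sum>p\<le>m. ?f p (m - p))"
      by (rule sum.cong[OF refl]) (simp add: cm_choose mult_ac)
    finally show "cm m * Lsum U Bs m (\<lambda>bs. \<Sum>J\<in>Pow {..<m}. X (nths bs J) * Y (nths bs (-J))) = (\<Sum>p\<le>m. ?f p (m - p))" .
  qed
  also have "\<dots> = (\<Sum>(p, q)\<in>{(p, q). p + q \<le> N}. ?f p q)"
    by (rule sum.triangle_reindex_eq[symmetric])
  also have "\<dots> = (\<Sum>(p, q)\<in>{..N} \<times> {..N}. ?f p q)"
  proof (rule sum.mono_neutral_left)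
    show "finite ({..N} \<times> {..N})" by simp
    show "{(p, q). p + q \<le> N} \<subseteq> {..N} \<times> {..N}" by auto
    show "\<forall>i\<in>{..N} \<times> {..N} - {(p, q). p + q \<le> N}. (case i of (p, q) \<Rightarrow> ?f p q) = 0"
    proof
      fix i assume i: "i \<in> {..N} \<times> {..N} - {(p, q). p + q \<le> N}"
      obtain p q where pq: "i = (p, q)" by (cases i)
      have "\<not> p + q \<le> N" using i pq by auto
      have "?f p q = 0"
      proof (rule ccontr)
        assume "?f p q \<noteq> 0"
        hence "Lsum U Bs p X \<noteq> 0" "Lsum U Bs q Y \<noteq> 0" by auto
        hence "p < h1" "q < h2" using vX vY by auto
        with hN \<open>\<not> p + q \<le> N\<close> show False by simp
      qed
      then show "(case i of (p, q) \<Rightarrow> ?f p q) = 0" using pq by simp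
    qed
  qed
  also have "\<dots> = (\<Sum>p\<le>N. cm p * Lsum U Bs p X) * (\<Sum>q\<le>N. cm q * Lsum U Bs q Y)"
    by (simp add: sum_product sum.cartesian_product)
  finally show ?thesis .
qed

lemma T_ins:
  fixes v :: "nat \<Rightarrow> 'a::field_char_0"
  assumes zN: "\<And>b. b \<in> {1..N} \<Longrightarrow> Lsum (uu v) {1..N} N (Z b) = 0"
  shows "(\<Sum>m\<le>N. cm m * Lsum (uu v) {1..N} m (\<lambda>bs. \<Sum>l<m. of_nat (2 * bs ! l + 1) * Z (bs ! l) (nths bs (-{l}))))
       = - (\<Sum>b\<in>{1..N}. v (2 * b - 1) * (\<Sum>m\<le>N. cm m * Lsum (uu v) {1..N} m (Z b)))"
proof (cases N)
  case 0 then show ?thesis by simp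
next
  case (Suc N')
  let ?U = "uu v" and ?B = "{1..N}"
  have "(\<Sum>m\<le>N. cm m * Lsum ?U ?B m (\<lambda>bs. \<Sum>l<m. of_nat (2 * bs ! l + 1) * Z (bs ! l) (nths bs (-{l}))))
      = (\<Sum>m\<le>N'. cm (Suc m) * Lsum ?U ?B (Suc m) (\<lambda>bs. \<Sum>l<Suc m. of_nat (2 * bs ! l + 1) * Z (bs ! l) (nths bs (-{l}))))"
    unfolding Suc by (subst sum.atMost_Suc_shift) simp
  also have "\<dots> = (\<Sum>m\<le>N'. cm (Suc m) * (of_nat (Suc m) * (\<Sum>b\<in>?B. of_nat (2 * b + 1) * ?U b * Lsum ?U ?B m (Z b))))"
    by (rule sum.cong[OF refl], rule arg_cong2[where f = "(*)"], rule refl)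
       (rule Lsum_ins[where c = "\<lambda>b. of_nat (2 * b + 1)" and Z = Z])
  also have "\<dots> = (\<Sum>m\<le>N'. - cm m * (\<Sum>b\<in>?B. v (2 * b - 1) * Lsum ?U ?B m (Z b)))"
  proof (rule sum.cong[OF refl])
    fix m
    have "cm (Suc m) * (of_nat (Suc m) * (\<Sum>b\<in>?B. of_nat (2 * b + 1) * ?U b * Lsum ?U ?B m (Z b)))
        = (cm (Suc m) * of_nat (Suc m)) * (\<Sum>b\<in>?B. (of_nat (2 * b + 1) * ?U b) * Lsum ?U ?B m (Z b))"
      by (simp only: mult.assoc)
    also have "\<dots> = - cm m * (\<Sum>b\<in>?B. v (2 * b - 1) * Lsum ?U ?B m (Z b))"
      by (simp only: cm_Suc uu_mult)
    finally show "cm (Suc m) * (of_nat (Suc m) * (\<Sum>b\<in>?B. of_nat (2 * b + 1) * ?U b * Lsum ?U ?B m (Z b)))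
        = - cm m * (\<Sum>b\<in>?B. v (2 * b - 1) * Lsum ?U ?B m (Z b))" .
  qed
  also have "\<dots> = - (\<Sum>m\<le>N'. \<Sum>b\<in>?B. cm m * (v (2 * b - 1) * Lsum ?U ?B m (Z b)))"
    by (simp add: sum_distrib_left sum_negf)
  also have "\<dots> = - (\<Sum>b\<in>?B. \<Sum>m\<le>N'. cm m * (v (2 * b - 1) * Lsum ?U ?B m (Z b)))"
    by (subst sum.swap) (rule refl)
  also have "\<dots> = - (\<Sum>b\<in>?B. v (2 * b - 1) * (\<Sum>m\<le>N'. cm m * Lsum ?U ?B m (Z b)))"
    by (simp add: sum_distrib_left mult_ac)
  also have "\<dots> = - (\<Sum>b\<in>?B. v (2 * b - 1) * (\<Sum>m\<le>N. cm m * Lsum ?U ?B m (Z b)))"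
  proof -
    have "(\<Sum>m\<le>N. cm m * Lsum ?U ?B m (Z b)) = (\<Sum>m\<le>N'. cm m * Lsum ?U ?B m (Z b))" if "b \<in> ?B" for b
      using zN[OF that] Suc by simp
    then show ?thesis by simp
  qed
  finally show ?thesis .
qed

lemma sum_swap3: "(\<Sum>x\<in>A. \<Sum>y\<in>B. \<Sum>z\<in>C. f x y z) = (\<Sum>y\<in>B. \<Sum>z\<in>C. \<Sum>x\<in>A. f x y z)"
proof -
  have "(\<Sum>x\<in>A. \<Sum>y\<in>B. \<Sum>z\<in>C. f x y z) = (\<Sum>y\<in>B. \<Sum>x\<in>A. \<Sum>z\<in>C. f x y z)" by (rule sum.swap)
  also have "\<dots> = (\<Sum>y\<in>B. \<Sum>z\<in>C. \<Sum>x\<in>A. f x y z)" by (rule sum.cong[OF refl], rule sum.swap)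
  finally show ?thesis .
qed

lemma Phi_app_pointwise:
  fixes aK bs :: "nat list"
  shows "Phi FB g k (aK @ bs) =
      (if g = 0 then 0 else (1/2) * (\<Sum>a<k. FB (g - 1) (a # (k - 1 - a) # aK @ bs)))
    + (1/2) * (\<Sum>J1\<in>Pow {..<length aK}. \<Sum>h\<in>{..g}. \<Sum>a<k. \<Sum>J2\<in>Pow {..<length bs}.
          FB h (a # nths aK J1 @ nths bs J2) * FB (g - h) ((k - 1 - a) # nths aK (-J1) @ nths bs (-J2)))
    + (\<Sum>i<length aK. of_nat (2 * aK ! i + 1) * FB g ((k + aK ! i) # nths aK (-{i}) @ bs))
    + (\<Sum>l<length bs. of_nat (2 * bs ! l + 1) * FB g ((k + bs ! l) # aK @ nths bs (-{l})))
    + (if g = 1 \<and> aK @ bs = [] \<and> k = 0 then 1/8 else (0::'a::field_char_0))"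
proof -
  let ?m1 = "length aK" and ?m = "length bs"
  have P2: "(\<Sum>J\<in>Pow {..<length (aK @ bs)}. \<Sum>h\<in>{..g}. \<Sum>a<k. FB h (a # nths (aK @ bs) J) * FB (g - h) ((k - 1 - a) # nths (aK @ bs) (-J)))
      = (\<Sum>J1\<in>Pow {..<?m1}. \<Sum>h\<in>{..g}. \<Sum>a<k. \<Sum>J2\<in>Pow {..<?m}.
          FB h (a # nths aK J1 @ nths bs J2) * (FB (g - h) ((k - 1 - a) # nths aK (-J1) @ nths bs (-J2)) :: 'a))"
  proof -
    have "(\<Sum>J\<in>Pow {..<length (aK @ bs)}. \<Sum>h\<in>{..g}. \<Sum>a<k. FB h (a # nths (aK @ bs) J) * FB (g - h) ((k - 1 - a) # nths (aK @ bs) (-J)))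
        = (\<Sum>J1\<in>Pow {..<?m1}. \<Sum>J2\<in>Pow {..<?m}. \<Sum>h\<in>{..g}. \<Sum>a<k.
            FB h (a # nths (aK @ bs) (J1 \<union> (+) ?m1 ` J2)) * (FB (g - h) ((k - 1 - a) # nths (aK @ bs) (- (J1 \<union> (+) ?m1 ` J2))) :: 'a))"
      by (simp only: length_append sum_Pow_add)
    also have "\<dots> = (\<Sum>J1\<in>Pow {..<?m1}. \<Sum>J2\<in>Pow {..<?m}. \<Sum>h\<in>{..g}. \<Sum>a<k.
            FB h (a # nths aK J1 @ nths bs J2) * (FB (g - h) ((k - 1 - a) # nths aK (-J1) @ nths bs (-J2)) :: 'a))"
    proof (rule sum.cong[OF refl], rule sum.cong[OF refl])
      fix J1 J2 assume "J1 \<in> Pow {..<?m1}"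
      hence J1: "J1 \<subseteq> {..<length aK}" by simp
      show "(\<Sum>h\<in>{..g}. \<Sum>a<k. FB h (a # nths (aK @ bs) (J1 \<union> (+) ?m1 ` J2)) * (FB (g - h) ((k - 1 - a) # nths (aK @ bs) (- (J1 \<union> (+) ?m1 ` J2))) :: 'a))
          = (\<Sum>h\<in>{..g}. \<Sum>a<k. FB h (a # nths aK J1 @ nths bs J2) * (FB (g - h) ((k - 1 - a) # nths aK (-J1) @ nths bs (-J2)) :: 'a))"
        by (simp only: nths_app_split[OF J1])
    qed
    also have "\<dots> = (\<Sum>J1\<in>Pow {..<?m1}. \<Sum>h\<in>{..g}. \<Sum>a<k. \<Sum>J2\<in>Pow {..<?m}.
          FB h (a # nths aK J1 @ nths bs J2) * (FB (g - h) ((k - 1 - a) # nths aK (-J1) @ nths bs (-J2)) :: 'a))"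
      by (rule sum.cong[OF refl], rule sum_swap3)
    finally show ?thesis .
  qed
  have P3: "(\<Sum>i<length (aK @ bs). of_nat (2 * (aK @ bs) ! i + 1) * FB g ((k + (aK @ bs) ! i) # nths (aK @ bs) (-{i})))
      = (\<Sum>i<?m1. of_nat (2 * aK ! i + 1) * FB g ((k + aK ! i) # nths aK (-{i}) @ bs))
      + (\<Sum>l<?m. of_nat (2 * bs ! l + 1) * (FB g ((k + bs ! l) # aK @ nths bs (-{l})) :: 'a))"
    unfolding length_append sum_lessThan_add
    by (simp add: nth_append nths_app_del_left nths_app_del_right)
  show ?thesis unfolding Phi_def P2 P3 by (simp add: algebra_simps)
qed

lemma Lsum_div: "Lsum u B m (\<lambda>bs. X bs / (c::'a::field)) = Lsum u B m X / c"
  using Lsum_cmult[of u B m "inverse c" X] by (simp add: divide_inverse mult.commute)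

lemma T_star:
  fixes v :: "nat \<Rightarrow> 'a::field_char_0"
  assumes gN: "g \<le> N"
  shows "T v N g (k # aK) = Phi (T v N) g k aK - (\<Sum>b\<in>{1..N}. v (2 * b - 1) * T v N g ((k + b) # aK))"
proof -
  let ?U = "uu v" and ?B = "{1..N}"
  let ?m1 = "length aK"
  define Q1 where "Q1 = (\<lambda>bs::nat list. if g = 0 then 0 else (1/2) * (\<Sum>a<k. FB (g - 1) (a # (k - 1 - a) # aK @ bs) :: 'a))"
  define X where "X = (\<lambda>J1 h a (bs1::nat list). FB h (a # nths aK J1 @ bs1) :: 'a)"
  define Y where "Y = (\<lambda>J1 h a (bs2::nat list). FB (g - h) ((k - 1 - a) # nths aK (-J1) @ bs2) :: 'a)"
  define Q2 where "Q2 = (\<lambda>bs::nat list. (1/2) * (\<Sum>J1\<in>Pow {..<?m1}. \<Sum>h\<in>{..g}. \<Sum>a<k. \<Sum>J2\<in>Pow {..<length bs}.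
          X J1 h a (nths bs J2) * Y J1 h a (nths bs (-J2))))"
  define Q3a where "Q3a = (\<lambda>bs::nat list. \<Sum>i<?m1. of_nat (2 * aK ! i + 1) * FB g ((k + aK ! i) # nths aK (-{i}) @ bs) :: 'a)"
  define Z where "Z = (\<lambda>b (bs'::nat list). FB g ((k + b) # aK @ bs') :: 'a)"
  define Q3b where "Q3b = (\<lambda>bs::nat list. \<Sum>l<length bs. of_nat (2 * bs ! l + 1) * Z (bs ! l) (nths bs (-{l})))"
  define Q4 where "Q4 = (\<lambda>bs::nat list. if g = 1 \<and> aK @ bs = [] \<and> k = 0 then 1/8 else (0::'a))"
  have pw: "FB g ((k # aK) @ bs) = Q1 bs + Q2 bs + Q3a bs + Q3b bs + Q4 bs" for bs
    unfolding Q1_def Q2_def Q3a_def Q3b_def Q4_def X_def Y_def Z_def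
    using FB_rec[where 'a = 'a, of g k "aK @ bs"] Phi_app_pointwise[where 'a = 'a, of g k aK bs] by simp
  have T0: "T v N g (k # aK) = (\<Sum>m\<le>N. cm m * (Lsum ?U ?B m Q1 + Lsum ?U ?B m Q2 + Lsum ?U ?B m Q3a + Lsum ?U ?B m Q3b + Lsum ?U ?B m Q4))"
    unfolding T_def pw by (simp add: Lsum_add)
  define R1 where "R1 = (if g = 0 then 0 else (1/2) * (\<Sum>a<k. T v N (g - 1) (a # (k - 1 - a) # aK)))"
  define R2 where "R2 = (1/2) * (\<Sum>J1\<in>Pow {..<?m1}. \<Sum>h\<in>{..g}. \<Sum>a<k. T v N h (a # nths aK J1) * T v N (g - h) ((k - 1 - a) # nths aK (-J1)))"
  define R3 where "R3 = (\<Sum>i<?m1. of_nat (2 * aK ! i + 1) * T v N g ((k + aK ! i) # nths aK (-{i})))"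
  define R4 where "R4 = (if g = 1 \<and> aK = [] \<and> k = 0 then 1/8 else (0::'a))"
  have PhiT: "Phi (T v N) g k aK = R1 + R2 + R3 + R4"
    unfolding Phi_def R1_def R2_def R3_def R4_def by simp
  have S1: "(\<Sum>m\<le>N. cm m * Lsum ?U ?B m Q1) = R1"
  proof (cases "g = 0")
    case True
    then show ?thesis unfolding Q1_def R1_def by (simp add: Lsum_zero)
  next
    case False
    have "(\<Sum>m\<le>N. cm m * Lsum ?U ?B m Q1) = (\<Sum>m\<le>N. cm m * ((1/2) * (\<Sum>a<k. Lsum ?U ?B m (\<lambda>bs. FB (g - 1) (a # (k - 1 - a) # aK @ bs)))))"
      unfolding Q1_def using False by (simp add: Lsum_cmult Lsum_div Lsum_sum)
    also have "\<dots> = (1/2) * (\<Sum>a<k. \<Sum>m\<le>N. cm m * Lsum ?U ?B m (\<lambda>bs. FB (g - 1) (a # (k - 1 - a) # aK @ bs)))"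
      by (simp add: sum_distrib_left mult_ac sum.swap[of _ "{..N}" "{..<k}"])
    also have "\<dots> = R1" unfolding R1_def T_def using False by simp
    finally show ?thesis .
  qed
  have S2: "(\<Sum>m\<le>N. cm m * Lsum ?U ?B m Q2) = R2"
  proof -
    have "Lsum ?U ?B m Q2 = (1/2) * (\<Sum>J1\<in>Pow {..<?m1}. \<Sum>h\<in>{..g}. \<Sum>a<k.
              Lsum ?U ?B m (\<lambda>bs. \<Sum>J2\<in>Pow {..<m}. X J1 h a (nths bs J2) * Y J1 h a (nths bs (-J2))))" for m
    proof -
      have "Lsum ?U ?B m Q2 = Lsum ?U ?B m (\<lambda>bs. (1/2) * (\<Sum>J1\<in>Pow {..<?m1}. \<Sum>h\<in>{..g}. \<Sum>a<k. \<Sum>J2\<in>Pow {..<m}.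
          X J1 h a (nths bs J2) * Y J1 h a (nths bs (-J2))))"
        unfolding Q2_def by (rule Lsum_cong) simp
      then show ?thesis by (simp add: Lsum_cmult Lsum_div Lsum_sum)
    qed
    hence "(\<Sum>m\<le>N. cm m * Lsum ?U ?B m Q2) = (1/2) * (\<Sum>J1\<in>Pow {..<?m1}. \<Sum>h\<in>{..g}. \<Sum>a<k.
              \<Sum>m\<le>N. cm m * Lsum ?U ?B m (\<lambda>bs. \<Sum>J2\<in>Pow {..<m}. X J1 h a (nths bs J2) * Y J1 h a (nths bs (-J2))))"
      by (simp add: sum_distrib_left mult_ac sum.swap[of _ "{..N}"])
    also have "\<dots> = R2"
      unfolding R2_def
    proof (intro arg_cong2[where f = "(*)"] refl sum.cong)
      fix J1 h a assume h: "h \<in> {..g}"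
      have vX: "p < h" if nzp: "Lsum ?U ?B p (X J1 h a) \<noteq> 0" for p
      proof -
        obtain bs where bs: "length bs = p" "set bs \<subseteq> ?B" "X J1 h a bs \<noteq> 0" using Lsum_nz[OF nzp] by blast
        have "length bs \<le> sum_list bs" using bs(2) by (intro length_le_sum) auto
        moreover have "sum_list (a # nths aK J1 @ bs) + 1 = h" using FB_deg bs(3) unfolding X_def by blast
        ultimately show ?thesis using bs(1) by simp
      qed
      have vY: "q < g - h" if nzq: "Lsum ?U ?B q (Y J1 h a) \<noteq> 0" for q
      proof -
        obtain bs where bs: "length bs = q" "set bs \<subseteq> ?B" "Y J1 h a bs \<noteq> 0" using Lsum_nz[OF nzq] by blast
        have "length bs \<le> sum_list bs" using bs(2) by (intro length_le_sum) auto
        moreover have "sum_list ((k - 1 - a) # nths aK (-J1) @ bs) + 1 = g - h" using FB_deg bs(3) unfolding Y_def by blast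
        ultimately show ?thesis using bs(1) by simp
      qed
      have "(\<Sum>m\<le>N. cm m * Lsum ?U ?B m (\<lambda>bs. \<Sum>J2\<in>Pow {..<m}. X J1 h a (nths bs J2) * Y J1 h a (nths bs (-J2))))
          = (\<Sum>p\<le>N. cm p * Lsum ?U ?B p (X J1 h a)) * (\<Sum>q\<le>N. cm q * Lsum ?U ?B q (Y J1 h a))"
        by (rule T_prod[OF vX vY]) (use h gN in auto)
      also have "\<dots> = T v N h (a # nths aK J1) * T v N (g - h) ((k - 1 - a) # nths aK (-J1))"
        unfolding T_def X_def Y_def by simp
      finally show "(\<Sum>m\<le>N. cm m * Lsum ?U ?B m (\<lambda>bs. \<Sum>J2\<in>Pow {..<m}. X J1 h a (nths bs J2) * Y J1 h a (nths bs (-J2))))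
          = T v N h (a # nths aK J1) * T v N (g - h) ((k - 1 - a) # nths aK (-J1))" .
    qed
    finally show ?thesis .
  qed
  have S3a: "(\<Sum>m\<le>N. cm m * Lsum ?U ?B m Q3a) = R3"
  proof -
    have "(\<Sum>m\<le>N. cm m * Lsum ?U ?B m Q3a) = (\<Sum>m\<le>N. \<Sum>i<?m1. cm m * (of_nat (2 * aK ! i + 1) * Lsum ?U ?B m (\<lambda>bs. FB g ((k + aK ! i) # nths aK (-{i}) @ bs))))"
      unfolding Q3a_def by (simp add: Lsum_cmult Lsum_sum sum_distrib_left)
    also have "\<dots> = (\<Sum>i<?m1. \<Sum>m\<le>N. cm m * (of_nat (2 * aK ! i + 1) * Lsum ?U ?B m (\<lambda>bs. FB g ((k + aK ! i) # nths aK (-{i}) @ bs))))"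
      by (rule sum.swap)
    also have "\<dots> = R3" unfolding R3_def T_def by (simp add: sum_distrib_left mult_ac)
    finally show ?thesis .
  qed
  have S3b: "(\<Sum>m\<le>N. cm m * Lsum ?U ?B m Q3b) = - (\<Sum>b\<in>{1..N}. v (2 * b - 1) * T v N g ((k + b) # aK))"
  proof -
    have "(\<Sum>m\<le>N. cm m * Lsum ?U ?B m Q3b) = (\<Sum>m\<le>N. cm m * Lsum ?U ?B m (\<lambda>bs. \<Sum>l<m. of_nat (2 * bs ! l + 1) * Z (bs ! l) (nths bs (-{l}))))"
      unfolding Q3b_def by (intro sum.cong refl arg_cong2[where f = "(*)"] Lsum_cong) simp
    also have "\<dots> = - (\<Sum>b\<in>{1..N}. v (2 * b - 1) * (\<Sum>m\<le>N. cm m * Lsum ?U ?B m (Z b)))"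
    proof (rule T_ins)
      fix b assume b: "b \<in> {1..N}"
      show "Lsum ?U ?B N (Z b) = 0" unfolding Z_def
        using Lsum_FB_zero[of g N "(k + b) # aK" v N] b gN by simp
    qed
    also have "\<dots> = - (\<Sum>b\<in>{1..N}. v (2 * b - 1) * T v N g ((k + b) # aK))"
      unfolding T_def Z_def by simp
    finally show ?thesis .
  qed
  have S4: "(\<Sum>m\<le>N. cm m * Lsum ?U ?B m Q4) = R4"
  proof -
    have "Lsum ?U ?B (Suc m) Q4 = 0" for m by (rule Lsum_zero) (auto simp: Q4_def)
    then show ?thesis unfolding R4_def by (subst sum.atMost_shift) (simp add: Q4_def cm_def)
  qed
  have "T v N g (k # aK) = R1 + R2 + R3 - (\<Sum>b\<in>{1..N}. v (2 * b - 1) * T v N g ((k + b) # aK)) + R4"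
  proof -
    have "T v N g (k # aK) = (\<Sum>m\<le>N. cm m * Lsum ?U ?B m Q1) + (\<Sum>m\<le>N. cm m * Lsum ?U ?B m Q2)
       + (\<Sum>m\<le>N. cm m * Lsum ?U ?B m Q3a) + (\<Sum>m\<le>N. cm m * Lsum ?U ?B m Q3b) + (\<Sum>m\<le>N. cm m * Lsum ?U ?B m Q4)"
      unfolding T0 by (simp only: sum.distrib distrib_left)
    then show ?thesis unfolding S1 S2 S3a S3b S4 by simp
  qed
  then show ?thesis unfolding PhiT by simp
qed


lemma invert:
  fixes X Phi' :: "nat \<Rightarrow> 'a::field_char_0"
  assumes rel: "\<And>j. X j + (\<Sum>b\<in>{1..N}. v (2 * b - 1) * X (j + b)) = Phi' j"
    and van: "\<And>j. G \<le> j \<Longrightarrow> X j = 0"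
    and GN: "G \<le> N + 1" and GD: "G \<le> D"
  shows "X k = (\<Sum>d<D. sig v d * Phi' (k + d))"
proof -
  have rel': "Phi' j = (\<Sum>b\<le>N. cc v b * X (j + b))" for j
  proof -
    have "{..N} = insert 0 {1..N}" by auto
    then have "(\<Sum>b\<le>N. cc v b * X (j + b)) = X j + (\<Sum>b\<in>{1..N}. cc v b * X (j + b))" by (simp add: cc_def)
    also have "(\<Sum>b\<in>{1..N}. cc v b * X (j + b)) = (\<Sum>b\<in>{1..N}. v (2 * b - 1) * X (j + b))"
      by (rule sum.cong) (auto simp: cc_def)
    finally show ?thesis using rel[of j] by simp
  qed
  let ?f = "\<lambda>d b. sig v d * cc v b * X (k + (d + b))"
  have "(\<Sum>d<D. sig v d * Phi' (k + d)) = (\<Sum>d<D. \<Sum>b\<le>N. ?f d b)"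
    by (simp add: rel' sum_distrib_left mult.assoc add.assoc)
  also have "\<dots> = (\<Sum>(d, b)\<in>{..<D} \<times> {..N}. ?f d b)"
    by (simp add: sum.cartesian_product)
  also have "\<dots> = (\<Sum>(d, b)\<in>{(d, b). d + b < G}. ?f d b)"
  proof (rule sum.mono_neutral_right)
    show "finite ({..<D} \<times> {..N})" by simp
    show "{(d, b). d + b < G} \<subseteq> {..<D} \<times> {..N}" using GN GD by auto
    show "\<forall>i\<in>{..<D} \<times> {..N} - {(d, b). d + b < G}. (case i of (d, b) \<Rightarrow> ?f d b) = 0"
    proof
      fix i assume i: "i \<in> {..<D} \<times> {..N} - {(d, b). d + b < G}"
      obtain d b where db: "i = (d, b)" by (cases i)
      hence "\<not> d + b < G" using i by auto
      hence "X (k + (d + b)) = 0" using van by simp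
      then show "(case i of (d, b) \<Rightarrow> ?f d b) = 0" using db by simp
    qed
  qed
  also have "\<dots> = (\<Sum>e<G. \<Sum>d\<le>e. ?f d (e - d))"
    by (rule sum.triangle_reindex)
  also have "\<dots> = (\<Sum>e<G. X (k + e) * (\<Sum>d\<le>e. sig v d * cc v (e - d)))"
    by (rule sum.cong[OF refl]) (simp add: sum_distrib_left mult_ac)
  also have "\<dots> = (\<Sum>e<G. if e = 0 then X k else 0)"
    by (rule sum.cong[OF refl]) (simp add: sig_cc)
  also have "\<dots> = X k"
  proof (cases "G = 0")
    case True then show ?thesis using van[of k] by simp
  next
    case False then show ?thesis by simp
  qed
  finally show ?thesis by simp
qed

lemma Phi_cong:
  fixes Fn Gn :: "nat \<Rightarrow> nat list \<Rightarrow> 'a::field_char_0"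
  assumes agree: "\<And>g' bs. g' \<le> g \<Longrightarrow> bs \<noteq> [] \<Longrightarrow> 2*g' + length bs < 2*g + Suc (length aK) \<Longrightarrow> Fn g' bs = Gn g' bs"
    and F0: "\<And>bs. Fn 0 bs = 0" and G0: "\<And>bs. Gn 0 bs = 0"
  shows "Phi Fn g k aK = Phi Gn g k aK"
proof -
  let ?m = "length aK"
  have p1: "Fn (g - 1) (a # (k - 1 - a) # aK) = Gn (g - 1) (a # (k - 1 - a) # aK)" if "g \<noteq> 0" for a
    using that by (intro agree) auto
  have p2: "Fn h (a # nths aK J) * Fn (g - h) ((k - 1 - a) # nths aK (-J)) = Gn h (a # nths aK J) * Gn (g - h) ((k - 1 - a) # nths aK (-J))"
    if J: "J \<in> Pow {..<?m}" and h: "h \<in> {..g}" for J h a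
  proof (cases "h = 0 \<or> h = g")
    case True
    then show ?thesis using F0 G0 by (metis diff_self_eq_0 mult_zero_left mult_zero_right)
  next
    case False
    have Jsub: "J \<subseteq> {..<length aK}" using J by auto
    have lJ: "length (nths aK J) = card J" and lcJ: "length (nths aK (-J)) = ?m - card J"
      using length_nths_sub[OF Jsub] by auto
    have cJ: "card J \<le> ?m" using Jsub by (metis card_lessThan card_mono finite_lessThan)
    have "Fn h (a # nths aK J) = Gn h (a # nths aK J)" using False h lJ cJ by (intro agree) auto
    moreover have "Fn (g - h) ((k - 1 - a) # nths aK (-J)) = Gn (g - h) ((k - 1 - a) # nths aK (-J))"
      using False h lcJ cJ by (intro agree) auto
    ultimately show ?thesis by simp
  qed
  have p3: "Fn g ((k + aK ! i) # nths aK (-{i})) = Gn g ((k + aK ! i) # nths aK (-{i}))" if "i < ?m" for i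
  proof -
    have "length (nths aK (-{i})) = ?m - 1" using length_nths_sub(2)[of "{i}" aK] that by simp
    then show ?thesis using that by (intro agree) auto
  qed
  have s1: "(if g = 0 then 0 else (1/2) * (\<Sum>a<k. Fn (g - 1) (a # (k - 1 - a) # aK)))
          = (if g = 0 then 0 else (1/2) * (\<Sum>a<k. Gn (g - 1) (a # (k - 1 - a) # aK)))"
    using p1 by simp
  have s2: "(\<Sum>J\<in>Pow {..<?m}. \<Sum>h\<in>{..g}. \<Sum>a<k. Fn h (a # nths aK J) * Fn (g - h) ((k - 1 - a) # nths aK (-J)))
          = (\<Sum>J\<in>Pow {..<?m}. \<Sum>h\<in>{..g}. \<Sum>a<k. Gn h (a # nths aK J) * Gn (g - h) ((k - 1 - a) # nths aK (-J)))"
    by (intro sum.cong refl) (rule p2)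
  have s3: "(\<Sum>i<?m. of_nat (2 * aK ! i + 1) * Fn g ((k + aK ! i) # nths aK (-{i})))
          = (\<Sum>i<?m. of_nat (2 * aK ! i + 1) * Gn g ((k + aK ! i) # nths aK (-{i})))"
    using p3 by simp
  show ?thesis unfolding Phi_def s1 s2 s3 by (rule refl)
qed

lemma main_eq:
  fixes v :: "nat \<Rightarrow> 'a::field_char_0"
  shows "g \<le> N \<Longrightarrow> as \<noteq> [] \<Longrightarrow> Fv v g as = T v N g as"
proof (induction "2*g + length as" arbitrary: g as rule: less_induct)
  case less
  show ?case
  proof (cases "g = 0")
    case True
    then show ?thesis using Fv_genus0 T_genus0 by metis
  next
    case False
    obtain k aK where as: "as = k # aK" using less.prems by (cases as) auto
    let ?n = "Suc (length aK)"
    have st: "stab g ?n" using False by (simp add: stab_def)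
    have "Fv v g (k # aK) = (\<Sum>d<3*g+?n. sig v d * Phi (Fv v) g (k + d) aK)"
      using main_v[OF st] by auto
    also have "\<dots> = (\<Sum>d<3*g+?n. sig v d * Phi (T v N) g (k + d) aK)"
    proof (intro sum.cong refl arg_cong2[where f = "(*)"] Phi_cong)
      fix d g' and bs :: "nat list" assume g': "g' \<le> g" "bs \<noteq> []" "2*g' + length bs < 2*g + Suc (length aK)"
      show "Fv v g' bs = T v N g' bs"
        using less.hyps[of g' bs] g' less.prems as by simp
    qed (simp_all add: Fv_genus0 T_genus0)
    also have "\<dots> = T v N g (k # aK)"
    proof (rule invert[symmetric])
      fix j
      show "T v N g (j # aK) + (\<Sum>b\<in>{1..N}. v (2 * b - 1) * T v N g ((j + b) # aK)) = Phi (T v N) g j aK"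
        using T_star[OF less.prems(1), of v j aK] by simp
    next
      fix j assume "g \<le> j"
      then show "T v N g (j # aK) = 0" using T_vanish[of v N g "j # aK"] by force
    qed (use less.prems in auto)
    finally show ?thesis using as by simp
  qed
qed

lemma Lsum_expand:
  assumes "finite B"
  shows "Lsum u B m X = (\<Sum>bs\<in>{bs. set bs \<subseteq> B \<and> length bs = m}. prod_list (map u bs) * X bs)"
proof (induction m arbitrary: X)
  case 0
  have "{bs. set bs \<subseteq> B \<and> length bs = 0} = {[]}" by auto
  then show ?case by simp
next
  case (Suc m)
  have inj: "inj_on (\<lambda>(xs, n). n # xs) ({bs. set bs \<subseteq> B \<and> length bs = m} \<times> B)"
    by (auto simp: inj_on_def)
  have fin: "finite {bs. set bs \<subseteq> B \<and> length bs = m}" using assms by (rule finite_lists_length_eq)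
  have "(\<Sum>bs\<in>{bs. set bs \<subseteq> B \<and> length bs = Suc m}. prod_list (map u bs) * X bs)
      = (\<Sum>(xs, n)\<in>{bs. set bs \<subseteq> B \<and> length bs = m} \<times> B. prod_list (map u (n # xs)) * X (n # xs))"
    unfolding lists_length_Suc_eq by (subst sum.reindex[OF inj]) (simp add: split_def)
  also have "\<dots> = (\<Sum>xs\<in>{bs. set bs \<subseteq> B \<and> length bs = m}. \<Sum>n\<in>B. u n * (prod_list (map u xs) * X (n # xs)))"
    by (simp add: sum.cartesian_product mult.assoc)
  also have "\<dots> = (\<Sum>n\<in>B. \<Sum>xs\<in>{bs. set bs \<subseteq> B \<and> length bs = m}. u n * (prod_list (map u xs) * X (n # xs)))"
    by (rule sum.swap)
  also have "\<dots> = (\<Sum>n\<in>B. u n * Lsum u B m (\<lambda>bs. X (n # bs)))"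
    by (simp add: Suc.IH sum_distrib_left)
  finally show ?case by simp
qed


lemma Fcoef_Fv: "Fcoef (bgw_y v) g as = Fv v g as"
proof -
  have "(\<lambda>a. - 2 * int a - 2) = enc" by (rule ext) (simp add: enc_def)
  then show ?thesis by (simp add: Fcoef_def Fv_def)
qed

lemma bessel_bgw: "bessel_y = (bgw_y (\<lambda>_. 0) :: 'a::field fls)"
  unfolding bessel_y_def bgw_y_def by (simp add: fps_zero_def[symmetric])

theorem proposition4p11:
  fixes v :: "nat \<Rightarrow> 'a::field_char_0" and g :: nat and as :: "nat list"
  assumes "length as \<ge> 1" and "2 * g + length as > 2"
  shows "Fcoef (bgw_y v) g as =
    fsum (\<lambda>bs. ((-1) ^ length bs / fact (length bs))
                * (\<Prod>b\<leftarrow>bs. v (2 * b - 1) / of_nat (2 * b + 1))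
                * Fcoef bessel_y g (as @ bs))
         {bs. \<forall>b\<in>set bs. 1 \<le> b}"
proof -
  let ?L = "\<lambda>m. {bs. set bs \<subseteq> {1..g} \<and> length bs = m}"
  let ?F = "\<lambda>bs. cm (length bs) * prod_list (map (uu v) bs) * (FB g (as @ bs) :: 'a)"
  have asne: "as \<noteq> []" using assms(1) by auto
  have lhs: "Fcoef (bgw_y v) g as = T v g g as"
    using main_eq[of g g as v] asne by (simp add: Fcoef_Fv)
  have T_exp: "T v g g as = (\<Sum>m\<le>g. sum ?F (?L m))"
  proof -
    have "T v g g as = (\<Sum>m\<le>g. cm m * (\<Sum>bs\<in>?L m. prod_list (map (uu v) bs) * FB g (as @ bs)))"
      unfolding T_def by (simp add: Lsum_expand)
    also have "\<dots> = (\<Sum>m\<le>g. sum ?F (?L m))"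
      by (rule sum.cong[OF refl]) (simp add: sum_distrib_left mult.assoc)
    finally show ?thesis .
  qed
  have summand: "((-1) ^ length bs / fact (length bs)) * (\<Prod>b\<leftarrow>bs. v (2 * b - 1) / of_nat (2 * b + 1))
                * Fcoef bessel_y g (as @ bs) = ?F bs" for bs
  proof -
    have uu_eq: "uu v = (\<lambda>b. v (2 * b - 1) / of_nat (2 * b + 1))" by (rule ext) (simp add: uu_def)
    show ?thesis unfolding uu_eq cm_def bessel_bgw Fcoef_Fv by (rule refl)
  qed
  have fin: "finite (\<Union>m\<le>g. ?L m)" by (auto intro: finite_lists_length_eq)
  have "fsum ?F {bs. \<forall>b\<in>set bs. 1 \<le> b} = sum ?F (\<Union>m\<le>g. ?L m)"
  proof (rule fsum_eq_sum[OF fin])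
    show "(\<Union>m\<le>g. ?L m) \<subseteq> {bs. \<forall>b\<in>set bs. 1 \<le> b}" by auto
    fix bs assume bs: "bs \<in> {bs. \<forall>b\<in>set bs. 1 \<le> b}" and nin: "bs \<notin> (\<Union>m\<le>g. ?L m)"
    show "?F bs = 0"
    proof (rule ccontr)
      assume "?F bs \<noteq> 0"
      hence "FB g (as @ bs) \<noteq> (0::'a)" by auto
      from FB_deg[OF this] have s: "sum_list as + sum_list bs + 1 = g" by simp
      have "length bs \<le> sum_list bs" using bs by (intro length_le_sum) auto
      moreover have "b \<le> g" if "b \<in> set bs" for b
        using member_le_sum_list[OF that] s by simp
      ultimately have "bs \<in> ?L (length bs)" "length bs \<le> g" using bs s by auto
      with nin show False by blast
    qed
  qed
  also have "\<dots> = (\<Sum>m\<le>g. sum ?F (?L m))"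
    by (rule sum.UNION_disjoint) (auto intro: finite_lists_length_eq)
  finally have rhs: "fsum ?F {bs. \<forall>b\<in>set bs. 1 \<le> b} = (\<Sum>m\<le>g. sum ?F (?L m))" .
  show ?thesis unfolding summand lhs T_exp rhs ..
qed


end
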